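(* Assume $h$ is isotropic and $V=W\oplus W'$ with $W,W'$ maximal totally isotropic subspaces. Then for every $\Lambda\in\mathrm{Latt}^1_{o_D}(W)$, the function $\phi(\Lambda)=\Lambda\oplus\Lambda^{\#,W'}$, $t\mapsto\Lambda(t)\oplus\Lambda^{\#,W'}(t)$, is a self-dual $o_D$-lattice function of $V$, and the map $\phi:\mathrm{Latt}^1_{o_D}(W)\to\mathrm{Latt}^1_h(V)$ is affine and satisfies $\phi(g\Lambda)=i_{W,W'}(g)\phi(\Lambda)$ for all $g\in GL_D(W)$.
   Context: $k$ is a non-Archimedean local field with discrete valuation $\nu$ and residue characteristic different from $2$; $D$ a finite-dimensional central division $k$-algebra, $\nu$ extended to $D$, with $o_D$, $\mathfrak p_D$, $\pi_D$; $\rho$ a continuous involution of $D$; $V$ a finite-dimensional right $D$-space; $h$ a non-degenerate $\epsilon$-hermitian form on $V$ with adjoint involution $\sigma$. For a finite-dimensional right $D$-space $X$, an $o_D$-lattice function is a map $\Lambda$ from $\mathbb R$ to full $o_D$-lattices of $X$ with $\Lambda(r+\nu(\pi_D))=\Lambda(r)\pi_D$, decreasing, left continuous; set $\mathrm{Latt}^1_{o_D}(X)$, with $(g\Lambda)(r)=g\Lambda(r)$ and the affine structure: for $\Lambda,\Lambda'$ with common splitting basis $(v_i)$, $\Lambda(x)=\bigoplus v_i\{\delta:\nu(\delta)\ge x-\alpha_i\}$, $\Lambda'(x)=\bigoplus v_i\{\delta:\nu(\delta)\ge x-\alpha_i'\}$, $t\Lambda+(1-t)\Lambda'$ corresponds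 to $t\alpha_i+(1-t)\alpha_i'$. Self-dual: $\Lambda^\#=\Lambda$ where $M^\#=\{x\in V:h(x,M)\subseteq\mathfrak p_D\}$, $\Lambda^\#(r)=(\bigcup_{s>-r}\Lambda(s))^\#$; $\mathrm{Latt}^1_h(V)$ is the set of self-dual ones. For a lattice $M$ of $W$, $M^{\#,W'}=\{w'\in W':h(w',M)\subseteq\mathfrak p_D\}$, and $\Lambda^{\#,W'}(t)=(\bigcup_{s>-t}\Lambda(s))^{\#,W'}$. For $a\in\mathrm{End}_D(W)$, $a^{\sigma,W'}\in\mathrm{End}_D(W')$ is defined by $\sigma(a\oplus0)=0\oplus a^{\sigma,W'}$, and $i_{W,W'}(g)(w,w')=(g(w),(g^{\sigma,W'})^{-1}(w'))$ for $g\in GL_D(W)$. *)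

theory Defs
  imports Complex_Main "HOL-Library.Extended_Real"
begin

text \<open>D is modelled by a type 'd of class division_ring, nu is the (extended) valuation
 on D with nu 0 = infinity; o_D = {x. nu x >= 0}, p_D = {x. nu x > 0}; pi is a
 uniformizer pi_D.  k is the centre of D.\<close>

definition centre :: "'d::division_ring set" where
  "centre = {z. \<forall>x. z * x = x * z}"

definition oD :: "('d::division_ring \<Rightarrow> ereal) \<Rightarrow> 'd set" where
  "oD \<nu> = {x. \<nu> x \<ge> 0}"

definition pD :: "('d::division_ring \<Rightarrow> ereal) \<Rightarrow> 'd set" where
  "pD \<nu> = {x. \<nu> x > 0}"

definition discrete_valuation :: "('d::division_ring \<Rightarrow> ereal) \<Rightarrow> bool" where
  "discrete_valuation \<nu> \<longleftrightarrow>
     (\<forall>x. \<nu> x = \<infinity> \<longleftrightarrow> x = 0) \<and>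
     (\<forall>x. \<nu> x \<noteq> -\<infinity>) \<and>
     (\<forall>x y. \<nu> (x * y) = \<nu> x + \<nu> y) \<and>
     (\<forall>x y. \<nu> (x + y) \<ge> min (\<nu> x) (\<nu> y)) \<and>
     (\<exists>c::real. c > 0 \<and> \<nu> ` (UNIV - {0}) = {ereal (of_int n * c) | n. True})"

definition uniformizer :: "('d::division_ring \<Rightarrow> ereal) \<Rightarrow> 'd \<Rightarrow> bool" where
  "uniformizer \<nu> \<pi> \<longleftrightarrow> 0 < \<nu> \<pi> \<and> \<nu> \<pi> < \<infinity> \<and> (\<forall>x. 0 < \<nu> x \<longrightarrow> \<nu> \<pi> \<le> \<nu> x)"

definition nu_cauchy :: "('d::division_ring \<Rightarrow> ereal) \<Rightarrow> (nat \<Rightarrow> 'd) \<Rightarrow> bool" where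
  "nu_cauchy \<nu> x \<longleftrightarrow> (\<forall>M::real. \<exists>N. \<forall>m\<ge>N. \<forall>n\<ge>N. \<nu> (x m - x n) \<ge> ereal M)"

definition nu_converges :: "('d::division_ring \<Rightarrow> ereal) \<Rightarrow> (nat \<Rightarrow> 'd) \<Rightarrow> 'd \<Rightarrow> bool" where
  "nu_converges \<nu> x l \<longleftrightarrow> (\<forall>M::real. \<exists>N. \<forall>n\<ge>N. \<nu> (x n - l) \<ge> ereal M)"

definition local_setting :: "('d::division_ring \<Rightarrow> ereal) \<Rightarrow> 'd \<Rightarrow> bool" where
  "local_setting \<nu> \<pi> \<longleftrightarrow>
     discrete_valuation \<nu> \<and> uniformizer \<nu> \<pi> \<and>
     \<comment> \<open>valuation nontrivial on k\<close>
     (\<exists>z\<in>centre. 0 < \<nu> z \<and> \<nu> z < \<infinity>) \<and>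
     \<comment> \<open>k complete\<close>
     (\<forall>x. (\<forall>n. x n \<in> centre) \<longrightarrow> nu_cauchy \<nu> x \<longrightarrow> (\<exists>l\<in>centre. nu_converges \<nu> x l)) \<and>
     \<comment> \<open>residue field of k finite\<close>
     (\<exists>R. finite R \<and> R \<subseteq> centre \<inter> oD \<nu> \<and>
          (\<forall>x\<in>centre \<inter> oD \<nu>. \<exists>r\<in>R. x - r \<in> pD \<nu>)) \<and>
     \<comment> \<open>residue characteristic not 2\<close>
     1 + 1 \<notin> pD \<nu> \<and>
     \<comment> \<open>D finite-dimensional over k\<close>
     (\<exists>S. finite S \<and> (\<forall>d::'d. \<exists>c. (\<forall>s\<in>S. c s \<in> centre) \<and> d = (\<Sum>s\<in>S. c s * s)))"

definition continuous_involution :: "('d::division_ring \<Rightarrow> ereal) \<Rightarrow> ('d \<Rightarrow> 'd) \<Rightarrow> bool" where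
  "continuous_involution \<nu> \<rho> \<longleftrightarrow>
     (\<forall>x y. \<rho> (x + y) = \<rho> x + \<rho> y) \<and>
     (\<forall>x y. \<rho> (x * y) = \<rho> y * \<rho> x) \<and>
     (\<forall>x. \<rho> (\<rho> x) = x) \<and>
     (\<forall>x. \<forall>M::real. \<exists>N::real. \<forall>y. \<nu> (y - x) \<ge> ereal N \<longrightarrow> \<nu> (\<rho> y - \<rho> x) \<ge> ereal M)"

text \<open>V is the type 'v with a right scalar multiplication sm v a = v a.\<close>

definition lin_comb :: "('v::ab_group_add \<Rightarrow> 'd::division_ring \<Rightarrow> 'v) \<Rightarrow> 'v set \<Rightarrow> ('v \<Rightarrow> 'd) \<Rightarrow> 'v" where
  "lin_comb sm S c = (\<Sum>s\<in>S. sm s (c s))"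

definition d_span :: "('v::ab_group_add \<Rightarrow> 'd::division_ring \<Rightarrow> 'v) \<Rightarrow> 'v set \<Rightarrow> 'v set" where
  "d_span sm S = {lin_comb sm S c | c. True}"

definition right_vs :: "('v::ab_group_add \<Rightarrow> 'd::division_ring \<Rightarrow> 'v) \<Rightarrow> bool" where
  "right_vs sm \<longleftrightarrow>
     (\<forall>x y a. sm (x + y) a = sm x a + sm y a) \<and>
     (\<forall>x a b. sm x (a + b) = sm x a + sm x b) \<and>
     (\<forall>x a b. sm x (a * b) = sm (sm x a) b) \<and>
     (\<forall>x. sm x 1 = x)"

definition fin_dim_right_vs :: "('v::ab_group_add \<Rightarrow> 'd::division_ring \<Rightarrow> 'v) \<Rightarrow> bool" where
  "fin_dim_right_vs sm \<longleftrightarrow> right_vs sm \<and> (\<exists>S. finite S \<and> d_span sm S = UNIV)"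

definition subspace_r :: "('v::ab_group_add \<Rightarrow> 'd::division_ring \<Rightarrow> 'v) \<Rightarrow> 'v set \<Rightarrow> bool" where
  "subspace_r sm X \<longleftrightarrow> 0 \<in> X \<and> (\<forall>x\<in>X. \<forall>y\<in>X. x + y \<in> X) \<and> (\<forall>x\<in>X. \<forall>a. sm x a \<in> X)"

definition right_linear_on :: "('v::ab_group_add \<Rightarrow> 'd::division_ring \<Rightarrow> 'v) \<Rightarrow> 'v set \<Rightarrow> ('v \<Rightarrow> 'v) \<Rightarrow> bool" where
  "right_linear_on sm X f \<longleftrightarrow> (\<forall>x\<in>X. f x \<in> X) \<and>
     (\<forall>x\<in>X. \<forall>y\<in>X. f (x + y) = f x + f y) \<and> (\<forall>x\<in>X. \<forall>a. f (sm x a) = sm (f x) a)"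

definition eps_hermitian ::
  "('v::ab_group_add \<Rightarrow> 'd::division_ring \<Rightarrow> 'v) \<Rightarrow> ('d \<Rightarrow> 'd) \<Rightarrow> 'd \<Rightarrow> ('v \<Rightarrow> 'v \<Rightarrow> 'd) \<Rightarrow> bool" where
  "eps_hermitian sm \<rho> \<epsilon> h \<longleftrightarrow>
     (\<epsilon> = 1 \<or> \<epsilon> = -1) \<and>
     (\<forall>x y z. h (x + y) z = h x z + h y z) \<and>
     (\<forall>x y z. h x (y + z) = h x y + h x z) \<and>
     (\<forall>x y a. h (sm x a) y = \<rho> a * h x y) \<and>
     (\<forall>x y b. h x (sm y b) = h x y * b) \<and>
     (\<forall>x y. h y x = \<epsilon> * \<rho> (h x y))"

definition non_degenerate :: "('v::ab_group_add \<Rightarrow> 'v \<Rightarrow> 'd::division_ring) \<Rightarrow> bool" where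
  "non_degenerate h \<longleftrightarrow> (\<forall>x. (\<forall>y. h x y = 0) \<longrightarrow> x = 0)"

definition isotropic :: "('v::ab_group_add \<Rightarrow> 'v \<Rightarrow> 'd::division_ring) \<Rightarrow> bool" where
  "isotropic h \<longleftrightarrow> (\<exists>v. v \<noteq> 0 \<and> h v v = 0)"

definition totally_isotropic ::
  "('v::ab_group_add \<Rightarrow> 'd::division_ring \<Rightarrow> 'v) \<Rightarrow> ('v \<Rightarrow> 'v \<Rightarrow> 'd) \<Rightarrow> 'v set \<Rightarrow> bool" where
  "totally_isotropic sm h W \<longleftrightarrow> subspace_r sm W \<and> (\<forall>x\<in>W. \<forall>y\<in>W. h x y = 0)"

definition max_totally_isotropic ::
  "('v::ab_group_add \<Rightarrow> 'd::division_ring \<Rightarrow> 'v) \<Rightarrow> ('v \<Rightarrow> 'v \<Rightarrow> 'd) \<Rightarrow> 'v set \<Rightarrow> bool" where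
  "max_totally_isotropic sm h W \<longleftrightarrow> totally_isotropic sm h W \<and>
     (\<forall>U. totally_isotropic sm h U \<longrightarrow> W \<subseteq> U \<longrightarrow> U = W)"

definition direct_sum :: "('v::ab_group_add \<Rightarrow> 'd::division_ring \<Rightarrow> 'v) \<Rightarrow> 'v set \<Rightarrow> 'v set \<Rightarrow> bool" where
  "direct_sum sm W W' \<longleftrightarrow> subspace_r sm W \<and> subspace_r sm W' \<and> W \<inter> W' = {0} \<and>
     (\<forall>v. \<exists>w\<in>W. \<exists>w'\<in>W'. v = w + w')"

definition o_span ::
  "('v::ab_group_add \<Rightarrow> 'd::division_ring \<Rightarrow> 'v) \<Rightarrow> ('d \<Rightarrow> ereal) \<Rightarrow> 'v set \<Rightarrow> 'v set" where
  "o_span sm \<nu> S = {lin_comb sm S c | c. \<forall>s\<in>S. c s \<in> oD \<nu>}"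

definition full_lattice ::
  "('v::ab_group_add \<Rightarrow> 'd::division_ring \<Rightarrow> 'v) \<Rightarrow> ('d \<Rightarrow> ereal) \<Rightarrow> 'v set \<Rightarrow> 'v set \<Rightarrow> bool" where
  "full_lattice sm \<nu> X M \<longleftrightarrow> (\<exists>S. finite S \<and> S \<subseteq> X \<and> M = o_span sm \<nu> S \<and> d_span sm S = X)"

definition lattice_fun ::
  "('v::ab_group_add \<Rightarrow> 'd::division_ring \<Rightarrow> 'v) \<Rightarrow> ('d \<Rightarrow> ereal) \<Rightarrow> 'd \<Rightarrow> 'v set \<Rightarrow> (real \<Rightarrow> 'v set) \<Rightarrow> bool" where
  "lattice_fun sm \<nu> \<pi> X \<Lambda> \<longleftrightarrow>
     (\<forall>r. full_lattice sm \<nu> X (\<Lambda> r)) \<and>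
     (\<forall>r. \<Lambda> (r + real_of_ereal (\<nu> \<pi>)) = (\<lambda>m. sm m \<pi>) ` \<Lambda> r) \<and>
     (\<forall>r s. r \<le> s \<longrightarrow> \<Lambda> s \<subseteq> \<Lambda> r) \<and>
     (\<forall>r. \<Lambda> r = (\<Inter>s\<in>{..<r}. \<Lambda> s))"

text \<open>Duals: M^{#,Y} = {y in Y. h(y,M) in p_D}; for V itself take Y = UNIV.\<close>

definition dual_in ::
  "('d::division_ring \<Rightarrow> ereal) \<Rightarrow> ('v \<Rightarrow> 'v \<Rightarrow> 'd) \<Rightarrow> 'v set \<Rightarrow> 'v set \<Rightarrow> 'v set" where
  "dual_in \<nu> h Y M = {y\<in>Y. \<forall>m\<in>M. h y m \<in> pD \<nu>}"

definition lat_dual ::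
  "('d::division_ring \<Rightarrow> ereal) \<Rightarrow> ('v \<Rightarrow> 'v \<Rightarrow> 'd) \<Rightarrow> 'v set \<Rightarrow> (real \<Rightarrow> 'v set) \<Rightarrow> real \<Rightarrow> 'v set" where
  "lat_dual \<nu> h Y \<Lambda> t = dual_in \<nu> h Y (\<Union>s\<in>{-t<..}. \<Lambda> s)"

definition self_dual_lattice_fun ::
  "('v::ab_group_add \<Rightarrow> 'd::division_ring \<Rightarrow> 'v) \<Rightarrow> ('d \<Rightarrow> ereal) \<Rightarrow> 'd \<Rightarrow> ('v \<Rightarrow> 'v \<Rightarrow> 'd)
     \<Rightarrow> (real \<Rightarrow> 'v set) \<Rightarrow> bool" where
  "self_dual_lattice_fun sm \<nu> \<pi> h \<Lambda> \<longleftrightarrow> lattice_fun sm \<nu> \<pi> UNIV \<Lambda> \<and> lat_dual \<nu> h UNIV \<Lambda> = \<Lambda>"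

definition phi ::
  "('d::division_ring \<Rightarrow> ereal) \<Rightarrow> ('v::ab_group_add \<Rightarrow> 'v \<Rightarrow> 'd) \<Rightarrow> 'v set \<Rightarrow> (real \<Rightarrow> 'v set) \<Rightarrow> real \<Rightarrow> 'v set" where
  "phi \<nu> h W' \<Lambda> t = {w + w' | w w'. w \<in> \<Lambda> t \<and> w' \<in> lat_dual \<nu> h W' \<Lambda> t}"

definition is_basis ::
  "('v::ab_group_add \<Rightarrow> 'd::division_ring \<Rightarrow> 'v) \<Rightarrow> 'v set \<Rightarrow> nat \<Rightarrow> (nat \<Rightarrow> 'v) \<Rightarrow> bool" where
  "is_basis sm X n v \<longleftrightarrow> (\<forall>i<n. v i \<in> X) \<and>
     (\<forall>c. (\<Sum>i<n. sm (v i) (c i)) = 0 \<longrightarrow> (\<forall>i<n. c i = 0)) \<and>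
     (\<forall>x\<in>X. \<exists>c. x = (\<Sum>i<n. sm (v i) (c i)))"

definition splits ::
  "('v::ab_group_add \<Rightarrow> 'd::division_ring \<Rightarrow> 'v) \<Rightarrow> ('d \<Rightarrow> ereal) \<Rightarrow> nat \<Rightarrow> (nat \<Rightarrow> 'v)
     \<Rightarrow> (nat \<Rightarrow> real) \<Rightarrow> (real \<Rightarrow> 'v set) \<Rightarrow> bool" where
  "splits sm \<nu> n v \<alpha> \<Lambda> \<longleftrightarrow>
     (\<forall>x. \<Lambda> x = {(\<Sum>i<n. sm (v i) (\<delta> i)) | \<delta>. \<forall>i<n. \<nu> (\<delta> i) \<ge> ereal (x - \<alpha> i)})"

definition affine_comb ::
  "('v::ab_group_add \<Rightarrow> 'd::division_ring \<Rightarrow> 'v) \<Rightarrow> ('d \<Rightarrow> ereal) \<Rightarrow> 'v set \<Rightarrow> real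
     \<Rightarrow> (real \<Rightarrow> 'v set) \<Rightarrow> (real \<Rightarrow> 'v set) \<Rightarrow> (real \<Rightarrow> 'v set) \<Rightarrow> bool" where
  "affine_comb sm \<nu> X t \<Lambda> \<Lambda>' M \<longleftrightarrow>
     (\<exists>n v \<alpha> \<alpha>'. is_basis sm X n v \<and> splits sm \<nu> n v \<alpha> \<Lambda> \<and> splits sm \<nu> n v \<alpha>' \<Lambda>' \<and>
        splits sm \<nu> n v (\<lambda>i. t * \<alpha> i + (1 - t) * \<alpha>' i) M)"

definition GL_on :: "('v::ab_group_add \<Rightarrow> 'd::division_ring \<Rightarrow> 'v) \<Rightarrow> 'v set \<Rightarrow> ('v \<Rightarrow> 'v) set" where
  "GL_on sm W = {g. right_linear_on sm W g \<and> bij_betw g W W}"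

definition act :: "('v \<Rightarrow> 'v) \<Rightarrow> (real \<Rightarrow> 'v set) \<Rightarrow> real \<Rightarrow> 'v set" where
  "act g \<Lambda> r = g ` \<Lambda> r"

definition adj :: "('v \<Rightarrow> 'v \<Rightarrow> 'd) \<Rightarrow> ('v \<Rightarrow> 'v) \<Rightarrow> ('v \<Rightarrow> 'v)" where
  "adj h a = (THE b. \<forall>x y. h (a x) y = h x (b y))"

definition proj1 :: "'v::ab_group_add set \<Rightarrow> 'v set \<Rightarrow> 'v \<Rightarrow> 'v" where
  "proj1 W W' v = (THE w. w \<in> W \<and> (\<exists>w'\<in>W'. v = w + w'))"

definition proj2 :: "'v::ab_group_add set \<Rightarrow> 'v set \<Rightarrow> 'v \<Rightarrow> 'v" where
  "proj2 W W' v = (THE w'. w' \<in> W' \<and> (\<exists>w\<in>W. v = w + w'))"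

text \<open>a^{sigma,W'} is the restriction to W' of sigma(a (+) 0), where a (+) 0 = a o proj_W.\<close>

definition sigma_W' :: "('v::ab_group_add \<Rightarrow> 'v \<Rightarrow> 'd) \<Rightarrow> 'v set \<Rightarrow> 'v set \<Rightarrow> ('v \<Rightarrow> 'v) \<Rightarrow> ('v \<Rightarrow> 'v)" where
  "sigma_W' h W W' a = adj h (\<lambda>v. a (proj1 W W' v))"

definition i_WW' :: "('v::ab_group_add \<Rightarrow> 'v \<Rightarrow> 'd) \<Rightarrow> 'v set \<Rightarrow> 'v set \<Rightarrow> ('v \<Rightarrow> 'v) \<Rightarrow> ('v \<Rightarrow> 'v)" where
  "i_WW' h W W' g v = g (proj1 W W' v) + inv_into W' (sigma_W' h W W' g) (proj2 W W' v)"

end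

theory Submission
  imports Defs "HOL-Library.Function_Algebras"
begin



definition lcomb :: "('v::ab_group_add \<Rightarrow> 'd::division_ring \<Rightarrow> 'v) \<Rightarrow> nat \<Rightarrow> (nat \<Rightarrow> 'v) \<Rightarrow> (nat \<Rightarrow> 'd) \<Rightarrow> 'v" where
  "lcomb sm n u c = (\<Sum>i<n. sm (u i) (c i))"

definition indepf :: "('v::ab_group_add \<Rightarrow> 'd::division_ring \<Rightarrow> 'v) \<Rightarrow> nat \<Rightarrow> (nat \<Rightarrow> 'v) \<Rightarrow> bool" where
  "indepf sm n u \<longleftrightarrow> (\<forall>c. lcomb sm n u c = 0 \<longrightarrow> (\<forall>i<n. c i = 0))"

definition spanf :: "('v::ab_group_add \<Rightarrow> 'd::division_ring \<Rightarrow> 'v) \<Rightarrow> nat \<Rightarrow> (nat \<Rightarrow> 'v) \<Rightarrow> 'v set" where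
  "spanf sm n u = range (lcomb sm n u)"

locale rvs =
  fixes sm :: "'v::ab_group_add \<Rightarrow> 'd::division_ring \<Rightarrow> 'v"
  assumes rv: "right_vs sm"
begin

lemma sm_addL: "sm (x + y) a = sm x a + sm y a" using rv unfolding right_vs_def by blast
lemma sm_addR: "sm x (a + b) = sm x a + sm x b" using rv unfolding right_vs_def by blast
lemma sm_mult: "sm x (a * b) = sm (sm x a) b" using rv unfolding right_vs_def by blast
lemma sm_one[simp]: "sm x 1 = x" using rv unfolding right_vs_def by blast

lemma sm_zeroR[simp]: "sm x 0 = 0"
  using sm_addR[of x 0 0] by simp
lemma sm_zeroL[simp]: "sm 0 a = 0"
  using sm_addL[of 0 0 a] by simp
lemma sm_minusR: "sm x (- a) = - sm x a"
  using minus_unique[of "sm x a" "sm x (-a)"] sm_addR[of x a "-a"] by simp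
lemma sm_minusL: "sm (- x) a = - sm x a"
  using minus_unique[of "sm x a" "sm (-x) a"] sm_addL[of x "-x" a] by simp
lemma sm_diffL: "sm (x - y) a = sm x a - sm y a"
  using sm_addL[of x "-y" a] sm_minusL by simp
lemma sm_diffR: "sm x (a - b) = sm x a - sm x b"
  using sm_addR[of x a "-b"] sm_minusR by simp
lemma sm_sumL: "sm (\<Sum>i\<in>A. f i) a = (\<Sum>i\<in>A. sm (f i) a)"
  by (induction A rule: infinite_finite_induct) (auto simp: sm_addL)
lemma sm_sumR: "sm x (\<Sum>i\<in>A. f i) = (\<Sum>i\<in>A. sm x (f i))"
  by (induction A rule: infinite_finite_induct) (auto simp: sm_addR)
lemma sm_inv: "a \<noteq> 0 \<Longrightarrow> sm (sm x a) (inverse a) = x"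
  by (simp flip: sm_mult)

lemma lcomb_add: "lcomb sm n u c + lcomb sm n u d = lcomb sm n u (\<lambda>i. c i + d i)"
  by (simp add: lcomb_def sm_addR sum.distrib)
lemma lcomb_diff: "lcomb sm n u c - lcomb sm n u d = lcomb sm n u (\<lambda>i. c i - d i)"
  by (simp add: lcomb_def sm_diffR sum_subtractf)
lemma lcomb_sm: "sm (lcomb sm n u c) a = lcomb sm n u (\<lambda>i. c i * a)"
  by (simp add: lcomb_def sm_sumL sm_mult)
lemma lcomb_Suc: "lcomb sm (Suc n) u c = lcomb sm n u c + sm (u n) (c n)"
  by (simp add: lcomb_def)
lemma lcomb_0[simp]: "lcomb sm 0 u c = 0"
  by (simp add: lcomb_def)
lemma lcomb_cong: "(\<And>i. i < n \<Longrightarrow> sm (u i) (c i) = sm (u' i) (c' i)) \<Longrightarrow> lcomb sm n u c = lcomb sm n u' c'"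
  unfolding lcomb_def by (rule sum.cong) auto
lemma lcomb_zero: "lcomb sm n u (\<lambda>i. 0) = 0"
  by (simp add: lcomb_def)
lemma lcomb_unit: "i < n \<Longrightarrow> lcomb sm n u (\<lambda>j. if j = i then a else 0) = sm (u i) a"
proof -
  assume "i < n"
  have "lcomb sm n u (\<lambda>j. if j = i then a else 0) = (\<Sum>j<n. if j = i then sm (u i) a else 0)"
    unfolding lcomb_def by (rule sum.cong) auto
  also have "\<dots> = sm (u i) a" using \<open>i < n\<close> by (simp add: sum.delta)
  finally show ?thesis .
qed

lemma spanf_0[simp]: "0 \<in> spanf sm n u"
  unfolding spanf_def using lcomb_zero by (metis rangeI)
lemma spanf_add: "x \<in> spanf sm n u \<Longrightarrow> y \<in> spanf sm n u \<Longrightarrow> x + y \<in> spanf sm n u"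
proof -
  assume "x \<in> spanf sm n u" "y \<in> spanf sm n u"
  then obtain c d where "x = lcomb sm n u c" "y = lcomb sm n u d" unfolding spanf_def by blast
  then have "x + y = lcomb sm n u (\<lambda>i. c i + d i)" using lcomb_add by simp
  then show ?thesis unfolding spanf_def by blast
qed
lemma spanf_sm: "x \<in> spanf sm n u \<Longrightarrow> sm x a \<in> spanf sm n u"
  unfolding spanf_def by (auto simp: lcomb_sm)
lemma spanf_gen: "i < n \<Longrightarrow> u i \<in> spanf sm n u"
  unfolding spanf_def using lcomb_unit[of i n u 1] by (metis rangeI sm_one)

lemma subspace_lcomb:
  assumes "subspace_r sm X" "\<And>i. i < n \<Longrightarrow> u i \<in> X"
  shows "lcomb sm n u c \<in> X"
  using assms(2)
proof (induction n)
  case 0 then show ?case using assms(1) by (simp add: subspace_r_def)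
next
  case (Suc n) then show ?case using assms(1) unfolding subspace_r_def by (simp add: lcomb_Suc)
qed

lemma subspace_spanf: "subspace_r sm (spanf sm n u)"
  unfolding subspace_r_def using spanf_add spanf_sm by auto

lemma spanf_mono: "(\<And>i. i < n \<Longrightarrow> u i \<in> spanf sm m x) \<Longrightarrow> spanf sm n u \<subseteq> spanf sm m x"
  unfolding spanf_def[of sm n u] using subspace_lcomb[OF subspace_spanf] by blast

lemma lcomb_reindex:
  assumes "bij_betw p {..<k} {..<k}"
  shows "lcomb sm k (u \<circ> p) c = lcomb sm k u (\<lambda>j. c (inv_into {..<k} p j))"
proof -
  have "lcomb sm k u (\<lambda>j. c (inv_into {..<k} p j)) = (\<Sum>i<k. sm (u (p i)) (c (inv_into {..<k} p (p i))))"
    unfolding lcomb_def using sum.reindex_bij_betw[OF assms, symmetric, of "\<lambda>j. sm (u j) (c (inv_into {..<k} p j))"]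
    by simp
  also have "\<dots> = lcomb sm k (u \<circ> p) c"
    unfolding lcomb_def apply (rule sum.cong) using assms bij_betw_inv_into_left by fastforce+
  finally show ?thesis by simp
qed

lemma indepf_perm:
  assumes "indepf sm k u" "bij_betw p {..<k} {..<k}"
  shows "indepf sm k (u \<circ> p)"
  unfolding indepf_def
proof (intro allI impI)
  fix c i assume c: "lcomb sm k (u \<circ> p) c = 0" and i: "i < k"
  let ?q = "inv_into {..<k} p"
  have "\<forall>j<k. c (?q j) = 0" using c assms(1) unfolding lcomb_reindex[OF assms(2)] indepf_def by blast
  moreover have "p i < k" "?q (p i) = i" using assms(2) i bij_betwE bij_betw_inv_into_left by fastforce+
  ultimately show "c i = 0" by metis
qed

lemma indepf_nonzero: "indepf sm k u \<Longrightarrow> i < k \<Longrightarrow> u i \<noteq> 0"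
  unfolding indepf_def using lcomb_unit[of i k u 1] by force

lemma indepf_Suc_D: "indepf sm (Suc k) u \<Longrightarrow> indepf sm k u"
  unfolding indepf_def
proof (intro allI impI)
  fix c i assume H: "\<forall>c. lcomb sm (Suc k) u c = 0 \<longrightarrow> (\<forall>i<Suc k. c i = 0)" "lcomb sm k u c = 0" "i < k"
  have "lcomb sm (Suc k) u (c(k := 0)) = 0"
    using H(2) by (simp add: lcomb_Suc cong: lcomb_cong)
  then show "c i = 0" using H(1) H(3) by (metis fun_upd_apply less_Suc_eq nat_neq_iff)
qed

lemma steinitz:
  "indepf sm k u \<Longrightarrow> (\<forall>i<k. u i \<in> spanf sm m x) \<Longrightarrow> k \<le> m"
proof (induction m arbitrary: k u)
  case 0
  show ?case
  proof (rule ccontr)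
    assume "\<not> k \<le> 0"
    then have "u 0 \<in> spanf sm 0 x" using 0 by auto
    then have "u 0 = 0" by (simp add: spanf_def)
    then show False using indepf_nonzero[OF 0(1)] \<open>\<not> k \<le> 0\<close> by auto
  qed
next
  case (Suc m)
  define a where "a = (\<lambda>i. SOME c. u i = lcomb sm (Suc m) x c)"
  have a: "\<And>i. i < k \<Longrightarrow> u i = lcomb sm (Suc m) x (a i)"
  proof -
    fix i assume "i < k"
    then have "\<exists>c. u i = lcomb sm (Suc m) x c" using Suc(3) unfolding spanf_def by blast
    then show "u i = lcomb sm (Suc m) x (a i)" unfolding a_def by (rule someI_ex)
  qed
  show ?case
  proof (cases "\<forall>i<k. a i m = 0")
    case True
    have "\<forall>i<k. u i \<in> spanf sm m x"
    proof (intro allI impI)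
      fix i assume "i < k"
      then have "u i = lcomb sm m x (a i)" using a True by (simp add: lcomb_Suc)
      then show "u i \<in> spanf sm m x" by (simp add: spanf_def)
    qed
    then show ?thesis using Suc.IH[OF Suc(2)] by simp
  next
    case False
    then obtain i0 where i0: "i0 < k" "a i0 m \<noteq> 0" by blast
    then obtain k' where k': "k = Suc k'" by (cases k) auto
    define p where "p = (\<lambda>i::nat. if i = i0 then k' else if i = k' then i0 else i)"
    have pp: "\<And>i. p (p i) = i" unfolding p_def by auto
    have pk: "\<And>i. i < k \<Longrightarrow> p i < k" unfolding p_def using i0 k' by auto
    have bp: "bij_betw p {..<k} {..<k}"
      unfolding bij_betw_def inj_on_def
      apply (intro conjI ballI impI)
      subgoal by (metis pp)
      subgoal using pk pp by (auto simp: image_def) (metis lessThan_iff)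
      done
    define v where "v = u \<circ> p"
    define b where "b = a \<circ> p"
    have vind: "indepf sm k v" unfolding v_def by (rule indepf_perm[OF Suc(2) bp])
    have vb: "\<And>i. i < k \<Longrightarrow> v i = lcomb sm (Suc m) x (b i)"
      unfolding v_def b_def using a pk by simp
    have bk: "b k' m \<noteq> 0" unfolding b_def p_def using i0 by simp
    define e where "e = inverse (b k' m)"
    define w where "w = (\<lambda>j. v j - sm (v k') (e * b j m))"
    have "\<forall>j<k'. w j \<in> spanf sm m x"
    proof (intro allI impI)
      fix j assume j: "j < k'"
      have "w j = lcomb sm (Suc m) x (b j) - lcomb sm (Suc m) x (\<lambda>l. b k' l * (e * b j m))"
        unfolding w_def using vb j k' by (simp add: lcomb_sm)
      also have "\<dots> = lcomb sm (Suc m) x (\<lambda>l. b j l - b k' l * (e * b j m))"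
        by (simp add: lcomb_diff)
      also have "\<dots> = lcomb sm m x (\<lambda>l. b j l - b k' l * (e * b j m))"
        using bk by (simp add: lcomb_Suc e_def mult.assoc[symmetric])
      finally show "w j \<in> spanf sm m x" by (simp add: spanf_def)
    qed
    moreover have "indepf sm k' w"
      unfolding indepf_def
    proof (intro allI impI)
      fix c i assume c: "lcomb sm k' w c = 0" and i: "i < k'"
      define c' where "c' = c(k' := - (\<Sum>j<k'. e * b j m * c j))"
      have "lcomb sm k' w c = lcomb sm k' v c - (\<Sum>j<k'. sm (v k') (e * b j m * c j))"
        unfolding lcomb_def w_def by (simp add: sm_diffL sum_subtractf sm_mult)
      also have "\<dots> = lcomb sm k v c'"
        unfolding k' lcomb_Suc c'_def
        by (simp add: sm_minusR sm_sumR cong: lcomb_cong)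
      finally have "lcomb sm k v c' = 0" using c by simp
      then have "c' i = 0" using vind i k' unfolding indepf_def by auto
      then show "c i = 0" using i unfolding c'_def by simp
    qed
    ultimately have "k' \<le> m" using Suc.IH by blast
    then show ?thesis using k' by simp
  qed
qed

lemma indepf_snoc:
  assumes "indepf sm n u" "y \<notin> spanf sm n u"
  shows "indepf sm (Suc n) (u(n := y))"
  unfolding indepf_def
proof (intro allI impI)
  fix c i assume c: "lcomb sm (Suc n) (u(n := y)) c = 0" and i: "i < Suc n"
  have c2: "lcomb sm n u c + sm y (c n) = 0"
    using c by (simp add: lcomb_Suc cong: lcomb_cong)
  have cn: "c n = 0"
  proof (rule ccontr)
    assume "c n \<noteq> 0"
    have "sm y (c n) = - lcomb sm n u c" using c2 by (simp add: eq_neg_iff_add_eq_0 add.commute)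
    then have "y = sm (- lcomb sm n u c) (inverse (c n))" using sm_inv[OF \<open>c n \<noteq> 0\<close>, of y] by simp
    moreover have "- lcomb sm n u c \<in> spanf sm n u"
    proof -
      have "- lcomb sm n u c = lcomb sm n u (\<lambda>i. 0 - c i)"
        using lcomb_diff[of n u "\<lambda>i. 0" c] lcomb_zero by simp
      then show ?thesis unfolding spanf_def by blast
    qed
    ultimately have "y \<in> spanf sm n u" using spanf_sm by simp
    then show False using assms(2) by simp
  qed
  then have "lcomb sm n u c = 0" using c2 by simp
  then show "c i = 0" using assms(1) i cn unfolding indepf_def by (metis less_Suc_eq)
qed

lemma lin_comb_as_lcomb:
  assumes "bij_betw f {..<N} S"
  shows "lin_comb sm S c = lcomb sm N f (c \<circ> f)"
  unfolding lin_comb_def lcomb_def using sum.reindex_bij_betw[OF assms, of "\<lambda>s. sm s (c s)"] by simp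

lemma d_span_as_spanf:
  assumes "bij_betw f {..<N} S"
  shows "d_span sm S = spanf sm N f"
proof
  show "d_span sm S \<subseteq> spanf sm N f"
    unfolding d_span_def spanf_def using lin_comb_as_lcomb[OF assms] by auto
next
  show "spanf sm N f \<subseteq> d_span sm S"
  proof
    fix x assume "x \<in> spanf sm N f"
    then obtain d where x: "x = lcomb sm N f d" by (auto simp: spanf_def)
    define c where "c = (\<lambda>s. d (inv_into {..<N} f s))"
    have "lcomb sm N f (c \<circ> f) = lcomb sm N f d"
      by (rule lcomb_cong) (simp add: c_def bij_betw_inv_into_left[OF assms])
    then have "x = lin_comb sm S c" using x lin_comb_as_lcomb[OF assms, of c] by simp
    then show "x \<in> d_span sm S" unfolding d_span_def by blast
  qed
qed

lemma is_basis_iff: "is_basis sm X n v \<longleftrightarrow> (\<forall>i<n. v i \<in> X) \<and> indepf sm n v \<and> X \<subseteq> spanf sm n v"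
proof -
  have "(\<forall>x\<in>X. \<exists>c. x = (\<Sum>i<n. sm (v i) (c i))) \<longleftrightarrow> X \<subseteq> spanf sm n v"
    unfolding spanf_def lcomb_def by (auto simp: subset_iff image_iff)
  moreover have "(\<forall>c. (\<Sum>i<n. sm (v i) (c i)) = 0 \<longrightarrow> (\<forall>i<n. c i = 0)) \<longleftrightarrow> indepf sm n v"
    unfolding indepf_def lcomb_def by (rule refl)
  ultimately show ?thesis unfolding is_basis_def by (simp only:)
qed

lemma exists_basis:
  assumes X: "subspace_r sm X" and S: "finite S" "S \<subseteq> X" "d_span sm S = X"
  shows "\<exists>n v. is_basis sm X n v"
proof -
  obtain f where f: "bij_betw f {..<card S} S" using S(1) ex_bij_betw_nat_finite lessThan_atLeast0 by metis
  have Xs: "X = spanf sm (card S) f" using d_span_as_spanf[OF f] S(3) by simp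
  define P where "P = (\<lambda>k. \<exists>u. indepf sm k u \<and> (\<forall>i<k. u i \<in> X))"
  have P0: "P 0" unfolding P_def indepf_def by auto
  have Pb: "\<And>k. P k \<Longrightarrow> k \<le> card S" unfolding P_def using steinitz Xs by blast
  obtain k where k: "P k" "\<And>k'. P k' \<Longrightarrow> k' \<le> k"
    using Nat.ex_has_greatest_nat[where P=P and k=0 and b="card S"] P0 Pb by auto
  then obtain u where u: "indepf sm k u" "\<forall>i<k. u i \<in> X" unfolding P_def by blast
  have "X \<subseteq> spanf sm k u"
  proof
    fix x assume x: "x \<in> X"
    show "x \<in> spanf sm k u"
    proof (rule ccontr)
      assume "x \<notin> spanf sm k u"
      then have "indepf sm (Suc k) (u(k := x))" by (rule indepf_snoc[OF u(1)])
      moreover have "\<forall>i<Suc k. (u(k := x)) i \<in> X" using u(2) x by (simp add: less_Suc_eq)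
      ultimately have "P (Suc k)" unfolding P_def by blast
      then show False using k(2) by force
    qed
  qed
  then show ?thesis using u is_basis_iff by blast
qed

end



locale valsetting =
  fixes \<nu> :: "'d::division_ring \<Rightarrow> ereal" and \<pi> :: 'd and \<rho> :: "'d \<Rightarrow> 'd"
  assumes LS: "local_setting \<nu> \<pi>" and CI: "continuous_involution \<nu> \<rho>"
begin

lemma DV: "discrete_valuation \<nu>" using LS unfolding local_setting_def by blast
lemma UN: "uniformizer \<nu> \<pi>" using LS unfolding local_setting_def by blast

lemma nu_inf_iff: "\<nu> x = \<infinity> \<longleftrightarrow> x = 0" using DV unfolding discrete_valuation_def by blast
lemma nu_not_minf: "\<nu> x \<noteq> -\<infinity>" using DV unfolding discrete_valuation_def by blast
lemma nu_mult: "\<nu> (x * y) = \<nu> x + \<nu> y" using DV unfolding discrete_valuation_def by blast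
lemma nu_add: "\<nu> (x + y) \<ge> min (\<nu> x) (\<nu> y)" using DV unfolding discrete_valuation_def by blast
lemma nu_0[simp]: "\<nu> 0 = \<infinity>" using nu_inf_iff by simp

definition vr :: "'d \<Rightarrow> real" where "vr x = real_of_ereal (\<nu> x)"

lemma nu_vr: "x \<noteq> 0 \<Longrightarrow> \<nu> x = ereal (vr x)"
  unfolding vr_def using nu_inf_iff nu_not_minf by (cases "\<nu> x") auto

lemma vr_mult: "x \<noteq> 0 \<Longrightarrow> y \<noteq> 0 \<Longrightarrow> vr (x * y) = vr x + vr y"
  using nu_mult[of x y] nu_vr[of x] nu_vr[of y] nu_vr[of "x*y"] by simp

lemma vr_1[simp]: "vr 1 = 0"
  using vr_mult[of 1 1] by simp

lemma nu_1[simp]: "\<nu> 1 = 0" using nu_vr[of 1] by (simp add: zero_ereal_def)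

lemma vr_inverse: "x \<noteq> 0 \<Longrightarrow> vr (inverse x) = - vr x"
  using vr_mult[of x "inverse x"] by simp

lemma vr_m1[simp]: "vr (-1) = 0"
  using vr_mult[of "-1" "-1"] by simp

lemma vr_minus: "x \<noteq> 0 \<Longrightarrow> vr (- x) = vr x"
  using vr_mult[of "-1" x] by simp

lemma nu_minus[simp]: "\<nu> (- x) = \<nu> x"
  by (cases "x = 0") (auto simp: nu_vr vr_minus)

lemma vr_power: "x \<noteq> 0 \<Longrightarrow> vr (x ^ k) = real k * vr x"
  by (induction k) (auto simp: vr_mult algebra_simps)

lemma nu_diff: "\<nu> (x - y) \<ge> min (\<nu> x) (\<nu> y)"
  using nu_add[of x "-y"] by simp

definition e :: real where "e = real_of_ereal (\<nu> \<pi>)"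

lemma pi_nz: "\<pi> \<noteq> 0" using UN unfolding uniformizer_def by auto
lemma nu_pi: "\<nu> \<pi> = ereal e" using nu_vr[OF pi_nz] by (simp add: e_def vr_def)
lemma vr_pi: "vr \<pi> = e" by (simp add: vr_def e_def)
lemma e_pos: "e > 0" using UN nu_pi unfolding uniformizer_def by simp
lemma pi_min: "x \<noteq> 0 \<Longrightarrow> vr x > 0 \<Longrightarrow> e \<le> vr x"
proof -
  assume x: "x \<noteq> 0" "vr x > 0"
  have "0 < \<nu> x" using nu_vr[OF x(1)] x(2) by (simp add: zero_ereal_def)
  then have "\<nu> \<pi> \<le> \<nu> x" using UN unfolding uniformizer_def by blast
  then show ?thesis using nu_vr[OF x(1)] nu_pi by simp
qed

lemma val_int: "x \<noteq> 0 \<Longrightarrow> \<exists>n::int. vr x = of_int n * e"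
proof -
  assume x: "x \<noteq> 0"
  obtain c :: real where c: "c > 0" "\<nu> ` (UNIV - {0}) = {ereal (of_int n * c) | n. True}"
    using DV unfolding discrete_valuation_def by blast
  have "ereal (of_int 1 * c) \<in> \<nu> ` (UNIV - {0})" using c by blast
  then obtain y where "y \<in> UNIV - {0}" and "ereal (of_int 1 * c) = \<nu> y" by (rule imageE)
  then have y: "y \<noteq> 0" "\<nu> y = ereal c" by auto
  then have "vr y = c" using nu_vr by simp
  then have ec: "e \<le> c" using pi_min y c by auto
  have "\<nu> \<pi> \<in> \<nu> ` (UNIV - {0})" using pi_nz by auto
  then obtain n0 :: int where n0: "e = of_int n0 * c" using c nu_pi by auto
  have "n0 > 0" using n0 e_pos c by (simp add: zero_less_mult_iff)
  then have "n0 = 1" using n0 ec c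
    by (smt (verit, ccfv_threshold) int_le_real_less mult_le_cancel_right2 of_int_1)
  then have ce: "c = e" using n0 by simp
  have "\<nu> x \<in> \<nu> ` (UNIV - {0})" using x by auto
  then obtain n :: int where "\<nu> x = ereal (of_int n * c)" using c by auto
  then show ?thesis using nu_vr[OF x] ce by auto
qed

lemma vr_neg_le: "x \<noteq> 0 \<Longrightarrow> vr x < 0 \<Longrightarrow> vr x \<le> - e"
proof -
  assume x: "x \<noteq> 0" "vr x < 0"
  obtain n :: int where n: "vr x = of_int n * e" using val_int[OF x(1)] by blast
  then have "n < 0" using x e_pos by (simp add: mult_less_0_iff)
  then have "of_int n \<le> (-1::real)" by simp
  then show ?thesis using mult_right_mono[of "real_of_int n" "-1" e] e_pos n by simp
qed

lemma rho_add: "\<rho> (x + y) = \<rho> x + \<rho> y" using CI unfolding continuous_involution_def by blast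
lemma rho_mult: "\<rho> (x * y) = \<rho> y * \<rho> x" using CI unfolding continuous_involution_def by blast
lemma rho_rho[simp]: "\<rho> (\<rho> x) = x" using CI unfolding continuous_involution_def by blast
lemma rho_cont: "\<exists>N::real. \<forall>y. \<nu> (y - x) \<ge> ereal N \<longrightarrow> \<nu> (\<rho> y - \<rho> x) \<ge> ereal M"
  using CI unfolding continuous_involution_def by blast

lemma rho_0[simp]: "\<rho> 0 = 0" using rho_add[of 0 0] by simp
lemma rho_minus: "\<rho> (- x) = - \<rho> x"
  using rho_add[of x "-x"] by (simp add: eq_neg_iff_add_eq_0 add.commute)
lemma rho_diff: "\<rho> (x - y) = \<rho> x - \<rho> y"
  using rho_add[of x "-y"] rho_minus by simp
lemma rho_1[simp]: "\<rho> 1 = 1"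
  using rho_mult[of 1 "\<rho> 1"] by simp
lemma rho_m1[simp]: "\<rho> (-1) = -1" by (simp add: rho_minus)
lemma rho_eq0[simp]: "\<rho> x = 0 \<longleftrightarrow> x = 0"
  by (metis rho_0 rho_rho)
lemma rho_inverse: "\<rho> (inverse x) = inverse (\<rho> x)"
proof (cases "x = 0")
  case False
  have "\<rho> (inverse x) * \<rho> x = 1" using rho_mult[of x "inverse x"] False by simp
  then show ?thesis by (metis False inverse_unique mult.right_neutral rho_eq0
        right_inverse mult.assoc)
qed simp
lemma rho_power: "\<rho> (x ^ k) = \<rho> x ^ k"
  by (induction k) (auto simp: rho_mult power_commutes)

lemma rho_pos: assumes "x \<noteq> 0" "vr x > 0" shows "vr (\<rho> x) > 0"
proof -
  obtain N :: real where N: "\<forall>y. \<nu> (y - 0) \<ge> ereal N \<longrightarrow> \<nu> (\<rho> y - \<rho> 0) \<ge> ereal 1"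
    using rho_cont[of 0 1] by blast
  obtain k :: nat where k: "real k * vr x \<ge> N" "k \<ge> 1"
  proof -
    obtain k0 :: nat where "N / vr x \<le> real k0" using real_arch_simple by blast
    then have "real (Suc k0) * vr x \<ge> N" using assms(2)
      by (smt (verit, ccfv_SIG) divide_le_eq mult_right_mono of_nat_Suc)
    then show ?thesis using that[of "Suc k0"] by simp
  qed
  have "\<nu> (x ^ k) = ereal (real k * vr x)"
    using nu_vr[of "x^k"] vr_power[OF assms(1)] assms(1) by simp
  then have "\<nu> (\<rho> (x ^ k)) \<ge> ereal 1" using N k by simp
  then have "ereal (real k * vr (\<rho> x)) \<ge> 1"
    using nu_vr[of "\<rho> x ^ k"] vr_power[of "\<rho> x" k] assms(1) by (simp add: rho_power)
  then have "real k * vr (\<rho> x) \<ge> 1" by simp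
  then show ?thesis using k(2) by (smt (verit) mult_nonneg_nonpos of_nat_0_le_iff)
qed

lemma rho_zero: assumes "x \<noteq> 0" "vr x = 0" shows "vr (\<rho> x) = 0"
proof (rule ccontr)
  assume H: "vr (\<rho> x) \<noteq> 0"
  have rx: "\<rho> x \<noteq> 0" using assms by simp
  show False
  proof (cases "vr (\<rho> x) > 0")
    case True
    then have "vr (\<rho> (\<rho> x)) > 0" using rho_pos rx by blast
    then show False using assms by simp
  next
    case False
    then have "vr (inverse (\<rho> x)) > 0" using H vr_inverse[OF rx] by simp
    then have "vr (\<rho> (inverse (\<rho> x))) > 0" using rho_pos rx by simp
    then show False using assms by (simp add: rho_inverse vr_inverse)
  qed
qed

lemma vr_rho_pi: "vr (\<rho> \<pi>) = e"
proof -
  have rp: "\<rho> \<pi> \<noteq> 0" using pi_nz by simp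
  obtain m :: int where m: "vr (\<rho> \<pi>) = of_int m * e" using val_int[OF rp] by blast
  have "vr (\<rho> \<pi>) > 0" using rho_pos pi_nz vr_pi e_pos by simp
  then have mpos: "m > 0" using m e_pos by (simp add: zero_less_mult_iff)
  define k where "k = nat m"
  have km: "real k = of_int m" using mpos k_def by simp
  define u where "u = \<rho> \<pi> * inverse (\<pi> ^ k)"
  have pk: "\<pi> ^ k \<noteq> 0" using pi_nz by simp
  have u0: "u \<noteq> 0" unfolding u_def using pk rp by simp
  have "vr u = 0" unfolding u_def using vr_mult[OF rp] pk vr_inverse vr_power pi_nz m km vr_pi
    by simp
  then have "vr (\<rho> u) = 0" using rho_zero u0 by blast
  moreover have "\<rho> u = inverse (\<rho> \<pi> ^ k) * \<pi>" unfolding u_def by (simp add: rho_mult rho_inverse rho_power)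
  moreover have "vr (inverse (\<rho> \<pi> ^ k) * \<pi>) = - (real k * (of_int m * e)) + e"
    using vr_mult[of "inverse (\<rho> \<pi> ^ k)" \<pi>] rp pi_nz vr_inverse vr_power m vr_pi by simp
  ultimately have "real k * (of_int m * e) = e" by simp
  then have "of_int m * of_int m = (1::real)" using km e_pos
    by (metis mult.assoc mult_cancel_right1 order_less_irrefl)
  then have "m * m = 1" by (metis of_int_eq_1_iff of_int_mult)
  then have "m = 1" using mpos by (metis mult_cancel_left1 pos_zmult_eq_1_iff)
  then show ?thesis using m by simp
qed

lemma vr_rho: "x \<noteq> 0 \<Longrightarrow> vr (\<rho> x) = vr x"
proof -
  have main: "vr (\<rho> x) = vr x" if x: "x \<noteq> 0" and n: "vr x = real k * e" for x k
  proof -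
    define u where "u = x * inverse (\<pi> ^ k)"
    have pk: "\<pi> ^ k \<noteq> 0" using pi_nz by simp
    have u0: "u \<noteq> 0" using x pk u_def by simp
    have "vr u = 0" unfolding u_def using vr_mult[OF x] pk vr_inverse vr_power pi_nz n vr_pi by simp
    then have "vr (\<rho> u) = 0" using rho_zero u0 by blast
    moreover have "\<rho> u = inverse (\<rho> \<pi> ^ k) * \<rho> x" unfolding u_def by (simp add: rho_mult rho_inverse rho_power)
    moreover have "vr (inverse (\<rho> \<pi> ^ k) * \<rho> x) = - (real k * e) + vr (\<rho> x)"
      using vr_mult[of "inverse (\<rho> \<pi> ^ k)" "\<rho> x"] x pi_nz vr_inverse vr_power vr_rho_pi by simp
    ultimately show ?thesis using n by simp
  qed
  assume x: "x \<noteq> 0"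
  obtain n :: int where n: "vr x = of_int n * e" using val_int[OF x] by blast
  show ?thesis
  proof (cases "n \<ge> 0")
    case True
    then show ?thesis using main[OF x, of "nat n"] n by simp
  next
    case False
    have ix: "inverse x \<noteq> 0" using x by simp
    have "vr (inverse x) = real (nat (- n)) * e" using False n vr_inverse[OF x] by simp
    then have "vr (\<rho> (inverse x)) = vr (inverse x)" using main[OF ix] by blast
    then show ?thesis using x by (simp add: rho_inverse vr_inverse)
  qed
qed

lemma nu_rho[simp]: "\<nu> (\<rho> x) = \<nu> x"
  by (cases "x = 0") (auto simp: nu_vr vr_rho)

lemma pD_iff: "a \<in> pD \<nu> \<longleftrightarrow> \<nu> a > 0" by (simp add: pD_def)
lemma oD_iff: "a \<in> oD \<nu> \<longleftrightarrow> \<nu> a \<ge> 0" by (simp add: oD_def)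
lemma pD_0[simp]: "0 \<in> pD \<nu>" by (simp add: pD_def)
lemma pD_add: "a \<in> pD \<nu> \<Longrightarrow> b \<in> pD \<nu> \<Longrightarrow> a + b \<in> pD \<nu>"
  unfolding pD_def using nu_add[of a b] by (auto simp: min_def split: if_splits)
lemma pD_minus[simp]: "- a \<in> pD \<nu> \<longleftrightarrow> a \<in> pD \<nu>" by (simp add: pD_def)
lemma pD_diff: "a \<in> pD \<nu> \<Longrightarrow> b \<in> pD \<nu> \<Longrightarrow> a - b \<in> pD \<nu>"
  using pD_add[of a "-b"] by simp
lemma pD_sum: "(\<And>i. i \<in> A \<Longrightarrow> f i \<in> pD \<nu>) \<Longrightarrow> (\<Sum>i\<in>A. f i) \<in> pD \<nu>"
  by (induction A rule: infinite_finite_induct) (auto intro: pD_add)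
lemma pD_rho[simp]: "\<rho> a \<in> pD \<nu> \<longleftrightarrow> a \<in> pD \<nu>" by (simp add: pD_def)

lemma nu_ge_iff: "x \<noteq> 0 \<Longrightarrow> \<nu> x \<ge> ereal r \<longleftrightarrow> vr x \<ge> r" by (simp add: nu_vr)
lemma nu_gt_iff: "x \<noteq> 0 \<Longrightarrow> \<nu> x > ereal r \<longleftrightarrow> vr x > r" by (simp add: nu_vr)

lemma mult_pD: "\<nu> (a * b) > 0 \<longleftrightarrow> a = 0 \<or> b = 0 \<or> vr a + vr b > 0"
  by (cases "a = 0"; cases "b = 0") (auto simp: nu_vr vr_mult)

end



definition smf :: "(nat \<Rightarrow> 'd::division_ring) \<Rightarrow> 'd \<Rightarrow> (nat \<Rightarrow> 'd)" where
  "smf f a = (\<lambda>i. f i * a)"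

lemma rvs_smf: "rvs smf"
  unfolding rvs_def right_vs_def smf_def by (auto simp: fun_eq_iff ring_distribs mult.assoc)

lemma sum_fun_app: "(\<Sum>k\<in>A. g k) i = (\<Sum>k\<in>A. g k i)" for g :: "nat \<Rightarrow> nat \<Rightarrow> 'a::ab_group_add"
  by (induction A rule: infinite_finite_induct) auto

lemma lcomb_smf: "lcomb smf n g c i = (\<Sum>k<n. g k i * c k)"
  unfolding lcomb_def smf_def by (simp add: sum_fun_app)

context rvs begin

lemma exists_basis_f:
  assumes X: "subspace_r sm X" and S: "X \<subseteq> spanf sm N f"
  shows "\<exists>n v. is_basis sm X n v"
proof -
  define P where "P = (\<lambda>k. \<exists>u. indepf sm k u \<and> (\<forall>i<k. u i \<in> X))"
  have P0: "P 0" unfolding P_def indepf_def by auto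
  have Pb: "\<And>k. P k \<Longrightarrow> k \<le> N" unfolding P_def using steinitz S by blast
  obtain k where k: "P k" "\<And>k'. P k' \<Longrightarrow> k' \<le> k"
    using Nat.ex_has_greatest_nat[where P=P and k=0 and b=N] P0 Pb by auto
  then obtain u where u: "indepf sm k u" "\<forall>i<k. u i \<in> X" unfolding P_def by blast
  have "X \<subseteq> spanf sm k u"
  proof
    fix x assume x: "x \<in> X"
    show "x \<in> spanf sm k u"
    proof (rule ccontr)
      assume "x \<notin> spanf sm k u"
      then have "indepf sm (Suc k) (u(k := x))" by (rule indepf_snoc[OF u(1)])
      moreover have "\<forall>i<Suc k. (u(k := x)) i \<in> X" using u(2) x by (simp add: less_Suc_eq)
      ultimately have "P (Suc k)" unfolding P_def by blast
      then show False using k(2) by force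
    qed
  qed
  then show ?thesis using u is_basis_iff by blast
qed

end

locale hsetting = valsetting \<nu> \<pi> \<rho>
  for \<nu> :: "'d::division_ring \<Rightarrow> ereal" and \<pi> :: 'd and \<rho> :: "'d \<Rightarrow> 'd" +
  fixes \<epsilon> :: 'd and sm :: "'v::ab_group_add \<Rightarrow> 'd \<Rightarrow> 'v" and h :: "'v \<Rightarrow> 'v \<Rightarrow> 'd"
    and W W' :: "'v set"
  assumes FD: "fin_dim_right_vs sm"
    and EH: "eps_hermitian sm \<rho> \<epsilon> h"
    and ND: "non_degenerate h"
    and MW: "max_totally_isotropic sm h W"
    and MW': "max_totally_isotropic sm h W'"
    and DS: "direct_sum sm W W'"

sublocale hsetting \<subseteq> rvs sm
  using FD unfolding fin_dim_right_vs_def rvs_def by blast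

context hsetting begin

lemma h_addL: "h (x + y) z = h x z + h y z" using EH unfolding eps_hermitian_def by blast
lemma h_addR: "h x (y + z) = h x y + h x z" using EH unfolding eps_hermitian_def by blast
lemma h_smL: "h (sm x a) y = \<rho> a * h x y" using EH unfolding eps_hermitian_def by blast
lemma h_smR: "h x (sm y b) = h x y * b" using EH unfolding eps_hermitian_def by blast
lemma h_sym: "h y x = \<epsilon> * \<rho> (h x y)" using EH unfolding eps_hermitian_def by blast
lemma eps_cases: "\<epsilon> = 1 \<or> \<epsilon> = -1" using EH unfolding eps_hermitian_def by blast

lemma h_0L[simp]: "h 0 y = 0" using h_addL[of 0 0 y] by simp
lemma h_0R[simp]: "h x 0 = 0" using h_addR[of x 0 0] by simp
lemma h_minusL: "h (- x) y = - h x y"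
  using minus_unique[of "h x y" "h (-x) y"] h_addL[of x "-x" y] by simp
lemma h_minusR: "h x (- y) = - h x y"
  using minus_unique[of "h x y" "h x (-y)"] h_addR[of x y "-y"] by simp
lemma h_diffL: "h (x - y) z = h x z - h y z" using h_addL[of x "-y" z] h_minusL by simp
lemma h_diffR: "h x (y - z) = h x y - h x z" using h_addR[of x y "-z"] h_minusR by simp
lemma h_sumR: "h x (\<Sum>i\<in>A. f i) = (\<Sum>i\<in>A. h x (f i))"
  by (induction A rule: infinite_finite_induct) (auto simp: h_addR)
lemma h_sumL: "h (\<Sum>i\<in>A. f i) y = (\<Sum>i\<in>A. h (f i) y)"
  by (induction A rule: infinite_finite_induct) (auto simp: h_addL)
lemma h_lcombR: "h x (lcomb sm n u c) = (\<Sum>i<n. h x (u i) * c i)"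
  unfolding lcomb_def by (simp add: h_sumR h_smR)
lemma h_lcombL: "h (lcomb sm n u c) y = (\<Sum>i<n. \<rho> (c i) * h (u i) y)"
  unfolding lcomb_def by (simp add: h_sumL h_smL)

lemma rho_eps[simp]: "\<rho> \<epsilon> = \<epsilon>" using eps_cases by auto
lemma eps_sq[simp]: "\<epsilon> * \<epsilon> = 1" using eps_cases by auto
lemma eps_nz[simp]: "\<epsilon> \<noteq> 0" using eps_sq by (metis mult_zero_left zero_neq_one)
lemma eps_comm: "\<epsilon> * x = x * \<epsilon>" using eps_cases by auto
lemma vr_eps[simp]: "vr \<epsilon> = 0" using eps_cases by auto

lemma h_zero_sym: "h x y = 0 \<longleftrightarrow> h y x = 0"
  using h_sym[of y x] h_sym[of x y] by auto

lemma nondegL: "(\<And>y. h x y = 0) \<Longrightarrow> x = 0" using ND unfolding non_degenerate_def by blast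
lemma nondegR: "(\<And>x. h x y = 0) \<Longrightarrow> y = 0" using nondegL h_zero_sym by blast

lemma subW: "subspace_r sm W" and subW': "subspace_r sm W'"
  using MW MW' unfolding max_totally_isotropic_def totally_isotropic_def by blast+
lemma isoW: "x \<in> W \<Longrightarrow> y \<in> W \<Longrightarrow> h x y = 0"
  using MW unfolding max_totally_isotropic_def totally_isotropic_def by blast
lemma isoW': "x \<in> W' \<Longrightarrow> y \<in> W' \<Longrightarrow> h x y = 0"
  using MW' unfolding max_totally_isotropic_def totally_isotropic_def by blast
lemma WW'0: "W \<inter> W' = {0}" using DS unfolding direct_sum_def by blast
lemma decomp: "\<exists>w\<in>W. \<exists>w'\<in>W'. v = w + w'" using DS unfolding direct_sum_def by blast

lemma W_0[simp]: "0 \<in> W" and W'_0[simp]: "0 \<in> W'" using subW subW' unfolding subspace_r_def by auto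
lemma W_add: "x \<in> W \<Longrightarrow> y \<in> W \<Longrightarrow> x + y \<in> W" using subW unfolding subspace_r_def by auto
lemma W'_add: "x \<in> W' \<Longrightarrow> y \<in> W' \<Longrightarrow> x + y \<in> W'" using subW' unfolding subspace_r_def by auto
lemma W_sm: "x \<in> W \<Longrightarrow> sm x a \<in> W" using subW unfolding subspace_r_def by auto
lemma W'_sm: "x \<in> W' \<Longrightarrow> sm x a \<in> W'" using subW' unfolding subspace_r_def by auto
lemma W_minus: "x \<in> W \<Longrightarrow> - x \<in> W" using W_sm[of x "-1"] sm_minusR by simp
lemma W'_minus: "x \<in> W' \<Longrightarrow> - x \<in> W'" using W'_sm[of x "-1"] sm_minusR by simp
lemma W_diff: "x \<in> W \<Longrightarrow> y \<in> W \<Longrightarrow> x - y \<in> W" using W_add W_minus by (metis diff_conv_add_uminus)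
lemma W'_diff: "x \<in> W' \<Longrightarrow> y \<in> W' \<Longrightarrow> x - y \<in> W'" using W'_add W'_minus by (metis diff_conv_add_uminus)
lemma W_lcomb: "(\<And>i. i < n \<Longrightarrow> u i \<in> W) \<Longrightarrow> lcomb sm n u c \<in> W" using subspace_lcomb[OF subW] by blast
lemma W'_lcomb: "(\<And>i. i < n \<Longrightarrow> u i \<in> W') \<Longrightarrow> lcomb sm n u c \<in> W'" using subspace_lcomb[OF subW'] by blast

lemma decomp_unique:
  assumes "w1 \<in> W" "w2 \<in> W" "y1 \<in> W'" "y2 \<in> W'" "w1 + y1 = w2 + y2"
  shows "w1 = w2 \<and> y1 = y2"
proof -
  have "w1 - w2 = y2 - y1" using assms(5) by (simp add: algebra_simps)
  moreover have "w1 - w2 \<in> W" "y2 - y1 \<in> W'" using assms W_diff W'_diff by auto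
  ultimately have "w1 - w2 \<in> W \<inter> W'" by simp
  then have "w1 - w2 = 0" using WW'0 by blast
  then show ?thesis using assms(5) by simp
qed

lemma proj1_eq: "w \<in> W \<Longrightarrow> y \<in> W' \<Longrightarrow> proj1 W W' (w + y) = w"
  unfolding proj1_def
  apply (rule the_equality)
  subgoal by blast
  subgoal using decomp_unique by blast
  done

lemma proj2_eq: "w \<in> W \<Longrightarrow> y \<in> W' \<Longrightarrow> proj2 W W' (w + y) = y"
  unfolding proj2_def
  apply (rule the_equality)
  subgoal by blast
  subgoal using decomp_unique by blast
  done

lemma proj_props: "proj1 W W' v \<in> W" "proj2 W W' v \<in> W'" "v = proj1 W W' v + proj2 W W' v"
proof -
  obtain w y where "w \<in> W" "y \<in> W'" "v = w + y" using decomp by blast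
  then show "proj1 W W' v \<in> W" "proj2 W W' v \<in> W'" "v = proj1 W W' v + proj2 W W' v"
    using proj1_eq proj2_eq by auto
qed

lemma proj1_W: "w \<in> W \<Longrightarrow> proj1 W W' w = w" using proj1_eq[of w 0] by simp
lemma proj1_W': "y \<in> W' \<Longrightarrow> proj1 W W' y = 0" using proj1_eq[of 0 y] by simp
lemma proj2_W': "y \<in> W' \<Longrightarrow> proj2 W W' y = y" using proj2_eq[of 0 y] by simp

lemma proj1_lin: "proj1 W W' (x + y) = proj1 W W' x + proj1 W W' y"
  "proj1 W W' (sm x a) = sm (proj1 W W' x) a"
proof -
  have "x + y = (proj1 W W' x + proj1 W W' y) + (proj2 W W' x + proj2 W W' y)"
    using proj_props(3)[of x] proj_props(3)[of y] by (simp add: algebra_simps)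
  then show "proj1 W W' (x + y) = proj1 W W' x + proj1 W W' y"
    using proj1_eq proj_props W_add W'_add by metis
  have "sm x a = sm (proj1 W W' x) a + sm (proj2 W W' x) a"
    using proj_props(3)[of x] sm_addL by metis
  then show "proj1 W W' (sm x a) = sm (proj1 W W' x) a"
    using proj1_eq proj_props W_sm W'_sm by metis
qed

lemma proj2_lin: "proj2 W W' (x + y) = proj2 W W' x + proj2 W W' y"
  "proj2 W W' (sm x a) = sm (proj2 W W' x) a"
proof -
  have "x + y = (proj1 W W' x + proj1 W W' y) + (proj2 W W' x + proj2 W W' y)"
    using proj_props(3)[of x] proj_props(3)[of y] by (simp add: algebra_simps)
  then show "proj2 W W' (x + y) = proj2 W W' x + proj2 W W' y"
    using proj2_eq proj_props W_add W'_add by metis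
  have "sm x a = sm (proj1 W W' x) a + sm (proj2 W W' x) a"
    using proj_props(3)[of x] sm_addL by metis
  then show "proj2 W W' (sm x a) = sm (proj2 W W' x) a"
    using proj2_eq proj_props W_sm W'_sm by metis
qed

lemma lin_lcomb:
  assumes "\<And>x y. f (x + y) = f x + f y" "\<And>x a. f (sm x a) = sm (f x) a"
  shows "f (lcomb sm n u c) = lcomb sm n (f \<circ> u) c"
proof (induction n)
  case 0
  have "f 0 = 0" using assms(1)[of 0 0] by simp
  then show ?case by simp
next
  case (Suc n) then show ?case by (simp add: lcomb_Suc assms)
qed

lemma pairW: "x \<in> W \<Longrightarrow> (\<And>y. y \<in> W' \<Longrightarrow> h y x = 0) \<Longrightarrow> x = 0"
proof -
  assume x: "x \<in> W" and H: "\<And>y. y \<in> W' \<Longrightarrow> h y x = 0"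
  show "x = 0"
  proof (rule nondegR)
    fix z
    have "h z x = h (proj1 W W' z) x + h (proj2 W W' z) x"
      using proj_props(3)[of z] h_addL by metis
    then show "h z x = 0" using isoW[OF proj_props(1) x] H[OF proj_props(2)] by simp
  qed
qed

lemma pairW': "y \<in> W' \<Longrightarrow> (\<And>x. x \<in> W \<Longrightarrow> h x y = 0) \<Longrightarrow> y = 0"
proof -
  assume y: "y \<in> W'" and H: "\<And>x. x \<in> W \<Longrightarrow> h x y = 0"
  show "y = 0"
  proof (rule nondegR)
    fix z
    have "h z y = h (proj1 W W' z) y + h (proj2 W W' z) y"
      using proj_props(3)[of z] h_addL by metis
    then show "h z y = 0" using isoW'[OF proj_props(2) y] H[OF proj_props(1)] by simp
  qed
qed

lemma pairW'L: "y \<in> W' \<Longrightarrow> (\<And>x. x \<in> W \<Longrightarrow> h y x = 0) \<Longrightarrow> y = 0"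
  using pairW' h_zero_sym by blast

lemma V_span: "\<exists>N f. UNIV \<subseteq> spanf sm N f"
proof -
  obtain S where S: "finite S" "d_span sm S = UNIV" using FD unfolding fin_dim_right_vs_def by blast
  obtain f where f: "bij_betw f {..<card S} S" using S(1) ex_bij_betw_nat_finite lessThan_atLeast0 by metis
  show ?thesis using d_span_as_spanf[OF f] S(2) by auto
qed

lemma basis_W: "\<exists>n v. is_basis sm W n v"
proof -
  obtain N f where f: "UNIV \<subseteq> spanf sm N f" using V_span by blast
  have "W \<subseteq> spanf sm N (proj1 W W' \<circ> f)"
  proof
    fix x assume x: "x \<in> W"
    obtain c where "x = lcomb sm N f c" using f unfolding spanf_def by blast
    then have "x = lcomb sm N (proj1 W W' \<circ> f) c"
      using lin_lcomb[of "proj1 W W'"] proj1_lin proj1_W[OF x] by metis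
    then show "x \<in> spanf sm N (proj1 W W' \<circ> f)" unfolding spanf_def by blast
  qed
  then show ?thesis using exists_basis_f[OF subW] by blast
qed

lemma basis_W': "\<exists>n v. is_basis sm W' n v"
proof -
  obtain N f where f: "UNIV \<subseteq> spanf sm N f" using V_span by blast
  have "W' \<subseteq> spanf sm N (proj2 W W' \<circ> f)"
  proof
    fix x assume x: "x \<in> W'"
    obtain c where "x = lcomb sm N f c" using f unfolding spanf_def by blast
    then have "x = lcomb sm N (proj2 W W' \<circ> f) c"
      using lin_lcomb[of "proj2 W W'"] proj2_lin proj2_W'[OF x] by metis
    then show "x \<in> spanf sm N (proj2 W W' \<circ> f)" unfolding spanf_def by blast
  qed
  then show ?thesis using exists_basis_f[OF subW'] by blast
qed

definition Tmap :: "nat \<Rightarrow> (nat \<Rightarrow> 'v) \<Rightarrow> 'v \<Rightarrow> (nat \<Rightarrow> 'd)" where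
  "Tmap n a y = (\<lambda>i. if i < n then h (a i) y else 0)"

definition Ef :: "nat \<Rightarrow> nat \<Rightarrow> 'd" where "Ef k = (\<lambda>i. if i = k then 1 else 0)"

lemma Tmap_lcomb: "Tmap n a (lcomb sm m u c) = lcomb smf m (Tmap n a \<circ> u) c"
  unfolding Tmap_def by (auto simp: fun_eq_iff lcomb_smf h_lcombR)

lemma supp_in_span: "(\<And>i. i \<ge> n \<Longrightarrow> g i = 0) \<Longrightarrow> g = lcomb smf n Ef g"
proof (rule ext)
  fix i assume H: "\<And>i. i \<ge> n \<Longrightarrow> g i = 0"
  have "lcomb smf n Ef g i = (\<Sum>k<n. (if k = i then g k else 0))"
    unfolding lcomb_smf Ef_def by (rule sum.cong) auto
  also have "\<dots> = g i" using H by (cases "i < n") (auto simp: sum.delta)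
  finally show "g i = lcomb smf n Ef g i" by simp
qed

lemma count_le:
  assumes Y: "subspace_r sm Y" and u: "indepf sm m u" "\<And>i. i < m \<Longrightarrow> u i \<in> Y"
    and inj: "\<And>y. y \<in> Y \<Longrightarrow> (\<And>i. i < n \<Longrightarrow> h (a i) y = 0) \<Longrightarrow> y = 0"
  shows "m \<le> n"
proof -
  interpret F: rvs smf by (rule rvs_smf)
  have "indepf smf m (Tmap n a \<circ> u)"
    unfolding indepf_def
  proof (intro allI impI)
    fix c i assume c: "lcomb smf m (Tmap n a \<circ> u) c = 0" and i: "i < m"
    have "Tmap n a (lcomb sm m u c) = 0" using c Tmap_lcomb by simp
    then have T0: "\<forall>i. (if i < n then h (a i) (lcomb sm m u c) else 0) = 0"
      unfolding Tmap_def fun_eq_iff by simp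
    have "h (a i) (lcomb sm m u c) = 0" if "i < n" for i using T0[rule_format, of i] that by simp
    then have "lcomb sm m u c = 0"
      using inj[OF subspace_lcomb[OF Y, of m u c]] u(2) by blast
    then show "c i = 0" using u(1) i unfolding indepf_def by blast
  qed
  moreover have "\<forall>i<m. (Tmap n a \<circ> u) i \<in> spanf smf n Ef"
    using supp_in_span[of n "Tmap n a _"] unfolding spanf_def Tmap_def by fastforce
  ultimately show ?thesis using F.steinitz by blast
qed

lemma dual_basis:
  assumes v: "is_basis sm W n v"
  shows "\<exists>w. (\<forall>j<n. w j \<in> W') \<and> (\<forall>i<n. \<forall>j<n. h (v i) (w j) = (if i = j then 1 else 0))"
proof -
  interpret F: rvs smf by (rule rvs_smf)
  obtain m u where u: "is_basis sm W' m u" using basis_W' by blast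
  have vW: "\<And>i. i < n \<Longrightarrow> v i \<in> W" and vi: "indepf sm n v" and vs: "W \<subseteq> spanf sm n v"
    using v is_basis_iff by auto
  have uW: "\<And>i. i < m \<Longrightarrow> u i \<in> W'" and ui: "indepf sm m u" and us: "W' \<subseteq> spanf sm m u"
    using u is_basis_iff by auto
  have injW': "y = 0" if "y \<in> W'" "\<And>i. i < n \<Longrightarrow> h (v i) y = 0" for y
  proof (rule pairW'[OF that(1)])
    fix x assume "x \<in> W"
    then obtain c where "x = lcomb sm n v c" using vs unfolding spanf_def by blast
    then show "h x y = 0" using that(2) by (simp add: h_lcombL)
  qed
  have injW: "x = 0" if "x \<in> W" "\<And>i. i < m \<Longrightarrow> h (u i) x = 0" for x
  proof (rule pairW[OF that(1)])
    fix y assume "y \<in> W'"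
    then obtain c where "y = lcomb sm m u c" using us unfolding spanf_def by blast
    then show "h y x = 0" using that(2) by (simp add: h_lcombL)
  qed
  have mn: "m \<le> n" using count_le[OF subW' ui uW injW'] by blast
  have nm: "n \<le> m" using count_le[OF subW vi vW injW] by blast
  have "\<forall>j<n. \<exists>c. Tmap n v (lcomb sm m u c) = Ef j"
  proof (intro allI impI)
    fix j assume j: "j < n"
    have Ti: "indepf smf m (Tmap n v \<circ> u)"
      unfolding indepf_def
    proof (intro allI impI)
      fix c i assume c: "lcomb smf m (Tmap n v \<circ> u) c = 0" and i: "i < m"
      have "Tmap n v (lcomb sm m u c) = 0" using c Tmap_lcomb by simp
      then have T0: "\<forall>i. (if i < n then h (v i) (lcomb sm m u c) else 0) = 0"
        unfolding Tmap_def fun_eq_iff by simp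
      have "h (v i) (lcomb sm m u c) = 0" if "i < n" for i using T0[rule_format, of i] that by simp
      then have "lcomb sm m u c = 0"
        using injW'[OF subspace_lcomb[OF subW', of m u c]] uW by blast
      then show "c i = 0" using ui i unfolding indepf_def by blast
    qed
    show "\<exists>c. Tmap n v (lcomb sm m u c) = Ef j"
    proof (rule ccontr)
      assume H: "\<nexists>c. Tmap n v (lcomb sm m u c) = Ef j"
      have "Ef j \<notin> spanf smf m (Tmap n v \<circ> u)"
        using H Tmap_lcomb unfolding spanf_def by auto
      then have "indepf smf (Suc m) ((Tmap n v \<circ> u)(m := Ef j))"
        by (rule F.indepf_snoc[OF Ti])
      moreover have "\<forall>i<Suc m. ((Tmap n v \<circ> u)(m := Ef j)) i \<in> spanf smf n Ef"
      proof (intro allI impI)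
        fix i assume "i < Suc m"
        have "((Tmap n v \<circ> u)(m := Ef j)) i = lcomb smf n Ef (((Tmap n v \<circ> u)(m := Ef j)) i)"
          by (rule supp_in_span) (use j in \<open>auto simp: Tmap_def Ef_def\<close>)
        then show "((Tmap n v \<circ> u)(m := Ef j)) i \<in> spanf smf n Ef" unfolding spanf_def by (metis rangeI)
      qed
      ultimately have "Suc m \<le> n" using F.steinitz by blast
      then show False using nm by simp
    qed
  qed
  then obtain C where C: "\<And>j. j < n \<Longrightarrow> Tmap n v (lcomb sm m u (C j)) = Ef j"
    by metis
  define w where "w = (\<lambda>j. lcomb sm m u (C j))"
  have "\<forall>j<n. w j \<in> W'" unfolding w_def using W'_lcomb[of m u] uW by blast
  moreover have "\<forall>i<n. \<forall>j<n. h (v i) (w j) = (if i = j then 1 else 0)"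
  proof (intro allI impI)
    fix i j assume "i < n" "j < n"
    then show "h (v i) (w j) = (if i = j then 1 else 0)"
      using fun_cong[OF C[of j], of i] unfolding w_def Tmap_def Ef_def by auto
  qed
  ultimately show ?thesis by blast
qed

end



context valsetting begin

lemma nu_ge_mult: "ereal K \<le> \<nu> a \<Longrightarrow> 0 \<le> \<nu> b \<Longrightarrow> ereal K \<le> \<nu> (a * b)"
  using add_mono[of "ereal K" "\<nu> a" 0 "\<nu> b"] by (simp add: nu_mult)

lemma nu_ge_mult': "0 \<le> \<nu> a \<Longrightarrow> ereal K \<le> \<nu> b \<Longrightarrow> ereal K \<le> \<nu> (a * b)"
  using add_mono[of 0 "\<nu> a" "ereal K" "\<nu> b"] by (simp add: nu_mult)

lemma nu_nonneg_mult: "0 \<le> \<nu> a \<Longrightarrow> 0 \<le> \<nu> b \<Longrightarrow> 0 \<le> \<nu> (a * b)"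
  using nu_ge_mult[of 0 a b] by (simp add: zero_ereal_def)

lemma nu_add_ge: "ereal K \<le> \<nu> a \<Longrightarrow> ereal K \<le> \<nu> b \<Longrightarrow> ereal K \<le> \<nu> (a + b)"
  using nu_add[of a b] by (simp add: min_def split: if_splits)

lemma nu_sum_ge: "(\<And>i. i \<in> A \<Longrightarrow> ereal K \<le> \<nu> (f i)) \<Longrightarrow> ereal K \<le> \<nu> (\<Sum>i\<in>A. f i)"
  by (induction A rule: infinite_finite_induct) (auto intro: nu_add_ge)

lemma nu_nonneg_add: "0 \<le> \<nu> a \<Longrightarrow> 0 \<le> \<nu> b \<Longrightarrow> 0 \<le> \<nu> (a + b)"
  using nu_add_ge[of 0 a b] by (simp add: zero_ereal_def)

lemma nu_pow: "\<nu> (\<pi> ^ N) = ereal (real N * e)"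
  using nu_vr[of "\<pi> ^ N"] vr_power[OF pi_nz] pi_nz vr_pi by simp

lemma big_pi: "\<exists>N. K \<le> real N * e"
proof -
  obtain N :: nat where "K / e \<le> real N" using real_arch_simple by blast
  then show ?thesis using e_pos by (auto simp: divide_le_eq)
qed

lemma nu_bound_abs: "x \<noteq> 0 \<Longrightarrow> \<bar>vr x\<bar> \<le> B \<Longrightarrow> ereal (- B) \<le> \<nu> x"
  by (simp add: nu_vr)

end

context hsetting begin

definition omod :: "'v set \<Rightarrow> bool" where
  "omod X \<longleftrightarrow> 0 \<in> X \<and> (\<forall>x\<in>X. \<forall>y\<in>X. x + y \<in> X) \<and> (\<forall>x\<in>X. \<forall>a. 0 \<le> \<nu> a \<longrightarrow> sm x a \<in> X)"

definition ocomb :: "nat \<Rightarrow> (nat \<Rightarrow> 'v) \<Rightarrow> 'v set" where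
  "ocomb n b = {lcomb sm n b c | c. \<forall>i<n. 0 \<le> \<nu> (c i)}"

lemma omod_lcomb:
  assumes "omod X" "\<And>i. i < n \<Longrightarrow> b i \<in> X" "\<And>i. i < n \<Longrightarrow> 0 \<le> \<nu> (c i)"
  shows "lcomb sm n b c \<in> X"
  using assms(2,3)
proof (induction n)
  case 0 then show ?case using assms(1) by (simp add: omod_def)
next
  case (Suc n) then show ?case using assms(1) unfolding omod_def by (simp add: lcomb_Suc)
qed

lemma ocomb_sub: "omod X \<Longrightarrow> (\<And>i. i < n \<Longrightarrow> b i \<in> X) \<Longrightarrow> ocomb n b \<subseteq> X"
  unfolding ocomb_def using omod_lcomb by blast

lemma omod_ocomb: "omod (ocomb n b)"
  unfolding omod_def
proof (intro conjI ballI allI impI)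
  show "0 \<in> ocomb n b" unfolding ocomb_def using lcomb_zero by force
next
  fix x y assume "x \<in> ocomb n b" "y \<in> ocomb n b"
  then obtain c d where "x = lcomb sm n b c" "\<forall>i<n. 0 \<le> \<nu> (c i)" "y = lcomb sm n b d" "\<forall>i<n. 0 \<le> \<nu> (d i)"
    unfolding ocomb_def by blast
  then show "x + y \<in> ocomb n b" unfolding ocomb_def using lcomb_add nu_nonneg_add by force
next
  fix x a assume "x \<in> ocomb n b" "0 \<le> \<nu> a"
  then obtain c where "x = lcomb sm n b c" "\<forall>i<n. 0 \<le> \<nu> (c i)"
    unfolding ocomb_def by blast
  then show "sm x a \<in> ocomb n b" unfolding ocomb_def using lcomb_sm nu_nonneg_mult \<open>0 \<le> \<nu> a\<close> by force
qed

lemma ocomb_gen: "i < n \<Longrightarrow> 0 \<le> \<nu> a \<Longrightarrow> sm (b i) a \<in> ocomb n b"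
  unfolding ocomb_def using lcomb_unit[of i n b a]
  by (intro CollectI exI[of _ "\<lambda>j. if j = i then a else 0"]) auto

lemma lcomb_uniq: "indepf sm n u \<Longrightarrow> lcomb sm n u c = lcomb sm n u d \<Longrightarrow> i < n \<Longrightarrow> c i = d i"
  using lcomb_diff[of n u c d] unfolding indepf_def by fastforce

lemma lcomb_Suc0: "c k = 0 \<Longrightarrow> lcomb sm (Suc k) u c = lcomb sm k u c"
  by (simp add: lcomb_Suc)

lemma lcomb_upd: "lcomb sm k u (c(k := a)) = lcomb sm k u c"
  by (rule lcomb_cong) auto

lemma lcomb_fupd: "lcomb sm k (u(k := a)) c = lcomb sm k u c"
  by (rule lcomb_cong) auto

lemma hermite:
  fixes K K2 :: real
  shows "indepf sm k u \<Longrightarrow> omod X \<Longrightarrow> X \<subseteq> spanf sm k u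
    \<Longrightarrow> (\<forall>x\<in>X. \<forall>c. x = lcomb sm k u c \<longrightarrow> (\<forall>i<k. ereal K \<le> \<nu> (c i)))
    \<Longrightarrow> (\<forall>i<k. \<forall>a. ereal K2 \<le> \<nu> a \<longrightarrow> sm (u i) a \<in> X)
    \<Longrightarrow> \<exists>b. indepf sm k b \<and> (\<forall>j<k. b j \<in> X) \<and> X = ocomb k b"
proof (induction k arbitrary: X)
  case 0
  have "X = {0}" using 0(2,3) unfolding omod_def spanf_def by auto
  moreover have "ocomb 0 b = {0}" for b unfolding ocomb_def by auto
  ultimately show ?case unfolding indepf_def by auto
next
  case (Suc k)
  note ind = Suc(2) and om = Suc(3) and sub = Suc(4) and bd = Suc(5) and full = Suc(6)
  define X' where "X' = {x \<in> X. x \<in> spanf sm k u}"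
  have om': "omod X'" using om subspace_spanf[of k u] unfolding omod_def X'_def subspace_r_def by auto
  have "\<exists>b. indepf sm k b \<and> (\<forall>j<k. b j \<in> X') \<and> X' = ocomb k b"
  proof (rule Suc.IH)
    show "indepf sm k u" using indepf_Suc_D[OF ind] .
    show "omod X'" by (rule om')
    show "X' \<subseteq> spanf sm k u" unfolding X'_def by blast
    show "\<forall>x\<in>X'. \<forall>c. x = lcomb sm k u c \<longrightarrow> (\<forall>i<k. ereal K \<le> \<nu> (c i))"
    proof (intro ballI allI impI)
      fix x c i assume x: "x \<in> X'" "x = lcomb sm k u c" "i < k"
      have "x = lcomb sm (Suc k) u (c(k := 0))"
        using x(2) by (simp add: lcomb_Suc lcomb_upd)
      moreover have "x \<in> X" using x(1) unfolding X'_def by simp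
      ultimately have "\<forall>i<Suc k. ereal K \<le> \<nu> ((c(k := 0)) i)" using bd by blast
      then have "ereal K \<le> \<nu> ((c(k := 0)) i)" using x(3) less_SucI by blast
      moreover have "i \<noteq> k" using x(3) by simp
      ultimately show "ereal K \<le> \<nu> (c i)" by simp
    qed
    show "\<forall>i<k. \<forall>a. ereal K2 \<le> \<nu> a \<longrightarrow> sm (u i) a \<in> X'"
      unfolding X'_def using full spanf_sm[OF spanf_gen] by auto
  qed
  then obtain b' where b': "indepf sm k b'" "\<forall>j<k. b' j \<in> X'" "X' = ocomb k b'" by blast
  have coord: "\<exists>c. x = lcomb sm (Suc k) u c" if "x \<in> X" for x
    using sub that unfolding spanf_def by blast
  define z0 :: int where "z0 = ceiling (K / e)"
  have zlow: "z0 \<le> z" if "x \<in> X" "x = lcomb sm (Suc k) u c" "c k \<noteq> 0" "vr (c k) = of_int z * e" for x c z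
  proof -
    have "ereal K \<le> \<nu> (c k)" using bd that by blast
    then have "K \<le> of_int z * e" using nu_vr[OF that(3)] that(4) by simp
    then have "K / e \<le> of_int z" using e_pos by (simp add: divide_le_eq)
    then show ?thesis unfolding z0_def by (simp add: ceiling_le_iff)
  qed
  define Z where "Z = {n::nat. \<exists>x c. x \<in> X \<and> x = lcomb sm (Suc k) u c \<and> c k \<noteq> 0 \<and> vr (c k) = of_int (int n + z0) * e}"
  have "Z \<noteq> {}"
  proof -
    obtain N where N: "K2 \<le> real N * e" using big_pi by blast
    define a where "a = \<pi> ^ N"
    have a0: "a \<noteq> 0" unfolding a_def using pi_nz by simp
    have "ereal K2 \<le> \<nu> a" unfolding a_def using nu_pow N by simp
    then have xin: "sm (u k) a \<in> X" using full by blast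
    have xe: "sm (u k) a = lcomb sm (Suc k) u (\<lambda>j. if j = k then a else 0)"
      using lcomb_unit[of k "Suc k" u a] by simp
    obtain z :: int where z: "vr a = of_int z * e" using val_int[OF a0] by blast
    have "z0 \<le> z" using zlow[OF xin xe] a0 z by simp
    then have "nat (z - z0) \<in> Z" unfolding Z_def using xin xe a0 z by (intro CollectI exI[of _ "sm (u k) a"]) auto
    then show ?thesis by blast
  qed
  then obtain m0 where "m0 \<in> Z" by blast
  define n0 where "n0 = (LEAST n. n \<in> Z)"
  have n0: "n0 \<in> Z" "\<And>n. n \<in> Z \<Longrightarrow> n0 \<le> n"
    unfolding n0_def using LeastI[of "\<lambda>n. n \<in> Z" m0] \<open>m0 \<in> Z\<close> Least_le by auto
  then obtain x0 c0 where x0: "x0 \<in> X" "x0 = lcomb sm (Suc k) u c0" "c0 k \<noteq> 0"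
    "vr (c0 k) = of_int (int n0 + z0) * e" unfolding Z_def by blast
  define \<mu> where "\<mu> = c0 k"
  have mumin: "vr \<mu> \<le> vr (c k)" if H: "x \<in> X" "x = lcomb sm (Suc k) u c" "c k \<noteq> 0" for x c
  proof -
    obtain z :: int where z: "vr (c k) = of_int z * e" using val_int[OF H(3)] by blast
    have "z0 \<le> z" using zlow[OF H z] .
    then have "nat (z - z0) \<in> Z" unfolding Z_def using H z by auto
    then have "n0 \<le> nat (z - z0)" using n0(2) by blast
    then have "int n0 + z0 \<le> z" using \<open>z0 \<le> z\<close> by linarith
    then have "of_int (int n0 + z0) * e \<le> of_int z * e" using e_pos
      by (intro mult_right_mono) auto
    then show ?thesis using z x0(4) \<mu>_def by simp
  qed
  have x0ns: "x0 \<notin> spanf sm k u"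
  proof
    assume "x0 \<in> spanf sm k u"
    then obtain d where "x0 = lcomb sm k u d" unfolding spanf_def by blast
    then have "lcomb sm (Suc k) u c0 = lcomb sm (Suc k) u (d(k := 0))"
      using x0(2) by (simp add: lcomb_Suc lcomb_upd)
    then have "c0 k = (d(k := 0)) k" using lcomb_uniq[OF ind] by blast
    then show False using x0(3) by simp
  qed
  have spb': "spanf sm k b' \<subseteq> spanf sm k u"
    by (rule spanf_mono) (use b'(2) in \<open>auto simp: X'_def\<close>)
  define b where "b = b'(k := x0)"
  have "indepf sm (Suc k) b"
    unfolding b_def by (rule indepf_snoc[OF b'(1)]) (use x0ns spb' in blast)
  moreover have bX: "\<forall>j<Suc k. b j \<in> X" using b'(2) x0(1) unfolding b_def X'_def by (auto simp: less_Suc_eq)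
  moreover have "X = ocomb (Suc k) b"
  proof
    show "ocomb (Suc k) b \<subseteq> X" using ocomb_sub[OF om] bX by blast
  next
    show "X \<subseteq> ocomb (Suc k) b"
    proof
      fix x assume x: "x \<in> X"
      obtain c where c: "x = lcomb sm (Suc k) u c" using coord[OF x] by blast
      show "x \<in> ocomb (Suc k) b"
      proof (cases "c k = 0")
        case True
        then have "x \<in> X'" unfolding X'_def using x c by (simp add: lcomb_Suc spanf_def)
        then obtain d where d: "x = lcomb sm k b' d" "\<forall>i<k. 0 \<le> \<nu> (d i)" using b'(3) unfolding ocomb_def by blast
        have "x = lcomb sm (Suc k) b (d(k := 0))" using d(1) unfolding b_def
          by (simp add: lcomb_Suc lcomb_upd lcomb_fupd)
        moreover have "\<forall>i<Suc k. 0 \<le> \<nu> ((d(k := 0)) i)" using d(2) by (auto simp: less_Suc_eq)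
        ultimately show ?thesis unfolding ocomb_def by blast
      next
        case False
        have mu0: "\<mu> \<noteq> 0" using x0(3) \<mu>_def by simp
        define t where "t = inverse \<mu> * c k"
        have t0: "t \<noteq> 0" using False mu0 t_def by simp
        have "vr t = vr (c k) - vr \<mu>" unfolding t_def using vr_mult mu0 False vr_inverse by simp
        then have "vr t \<ge> 0" using mumin[OF x c False] by simp
        then have tnn: "0 \<le> \<nu> t" using nu_vr[OF t0] by (simp add: zero_ereal_def)
        define x' where "x' = x + sm x0 (- t)"
        have "x' \<in> X" unfolding x'_def using om x x0(1) tnn unfolding omod_def by simp
        have "x' = lcomb sm (Suc k) u c + lcomb sm (Suc k) u (\<lambda>i. c0 i * (- t))"
          unfolding x'_def using c x0(2) lcomb_sm by simp
        also have "\<dots> = lcomb sm (Suc k) u (\<lambda>i. c i + c0 i * (- t))" by (simp add: lcomb_add)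
        also have "\<dots> = lcomb sm k u (\<lambda>i. c i + c0 i * (- t))"
          using mu0 by (intro lcomb_Suc0) (simp add: t_def \<mu>_def mult.assoc[symmetric])
        finally have "x' \<in> spanf sm k u" unfolding spanf_def by blast
        then have "x' \<in> X'" using \<open>x' \<in> X\<close> unfolding X'_def by blast
        then obtain d where d: "x' = lcomb sm k b' d" "\<forall>i<k. 0 \<le> \<nu> (d i)" using b'(3) unfolding ocomb_def by blast
        have "x = x' + sm x0 t" unfolding x'_def by (simp add: sm_minusR)
        also have "\<dots> = lcomb sm (Suc k) b (d(k := t))" using d(1) unfolding b_def
          by (simp add: lcomb_Suc lcomb_upd lcomb_fupd)
        finally have "x = lcomb sm (Suc k) b (d(k := t))" .
        moreover have "\<forall>i<Suc k. 0 \<le> \<nu> ((d(k := t)) i)" using d(2) tnn by (auto simp: less_Suc_eq)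
        ultimately show ?thesis unfolding ocomb_def by blast
      qed
    qed
  qed
  ultimately show ?case by blast
qed

end



context valsetting begin
lemma nu_prod_nonneg: "ereal (- B) \<le> \<nu> x \<Longrightarrow> ereal B \<le> \<nu> y \<Longrightarrow> 0 \<le> \<nu> (x * y)"
  using add_mono[of "ereal (- B)" "\<nu> x" "ereal B" "\<nu> y"] by (simp add: nu_mult flip: zero_ereal_def)
end

context hsetting begin

lemma o_span_as_ocomb:
  assumes "bij_betw f {..<N} S"
  shows "o_span sm \<nu> S = ocomb N f"
proof
  show "o_span sm \<nu> S \<subseteq> ocomb N f"
  proof
    fix x assume "x \<in> o_span sm \<nu> S"
    then obtain c where c: "x = lin_comb sm S c" "\<forall>s\<in>S. c s \<in> oD \<nu>" unfolding o_span_def by blast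
    have "x = lcomb sm N f (c \<circ> f)" using c(1) lin_comb_as_lcomb[OF assms] by simp
    moreover have "\<forall>i<N. 0 \<le> \<nu> ((c \<circ> f) i)" using c(2) assms bij_betwE unfolding oD_def by fastforce
    ultimately show "x \<in> ocomb N f" unfolding ocomb_def by blast
  qed
next
  show "ocomb N f \<subseteq> o_span sm \<nu> S"
  proof
    fix x assume "x \<in> ocomb N f"
    then obtain d where x: "x = lcomb sm N f d" "\<forall>i<N. 0 \<le> \<nu> (d i)" unfolding ocomb_def by blast
    define c where "c = (\<lambda>s. d (inv_into {..<N} f s))"
    have "lcomb sm N f (c \<circ> f) = lcomb sm N f d"
      by (rule lcomb_cong) (simp add: c_def bij_betw_inv_into_left[OF assms])
    then have "x = lin_comb sm S c" using x lin_comb_as_lcomb[OF assms, of c] by simp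
    moreover have "\<forall>s\<in>S. c s \<in> oD \<nu>"
    proof
      fix s assume "s \<in> S"
      then have "inv_into {..<N} f s < N" using assms
        by (metis bij_betw_def inv_into_into lessThan_iff)
      then show "c s \<in> oD \<nu>" using x(2) unfolding c_def oD_def by blast
    qed
    ultimately show "x \<in> o_span sm \<nu> S" unfolding o_span_def by blast
  qed
qed

lemma indepf_inj: "indepf sm n b \<Longrightarrow> inj_on b {..<n}"
proof (rule inj_onI)
  fix i j assume ind: "indepf sm n b" and ij: "i \<in> {..<n}" "j \<in> {..<n}" "b i = b j"
  show "i = j"
  proof (rule ccontr)
    assume "i \<noteq> j"
    define c where "c = (\<lambda>k. if k = i then (1::'d) else if k = j then -1 else 0)"
    have "lcomb sm n b c = (\<Sum>k<n. (if k = i then b i else 0) + (if k = j then - b j else 0))"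
      unfolding lcomb_def c_def by (rule sum.cong) (use \<open>i \<noteq> j\<close> in \<open>auto simp: sm_minusR\<close>)
    also have "\<dots> = 0" using ij by (simp add: sum.distrib sum.delta)
    finally have L0: "lcomb sm n b c = 0" .
    have "i < n" using ij(1) by simp
    then have "c i = 0" using ind L0 unfolding indepf_def by blast
    then show False unfolding c_def by simp
  qed
qed

lemma ocomb_sub_spanf: "ocomb n b \<subseteq> spanf sm n b" unfolding ocomb_def spanf_def by blast

lemma basis_full_lattice:
  assumes Y: "subspace_r sm Y" and b: "is_basis sm Y n b"
  shows "full_lattice sm \<nu> Y (ocomb n b)"
proof -
  have bY: "\<And>i. i < n \<Longrightarrow> b i \<in> Y" and bi: "indepf sm n b" and bs: "Y \<subseteq> spanf sm n b"
    using b is_basis_iff by auto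
  have bij: "bij_betw b {..<n} (b ` {..<n})" using indepf_inj[OF bi] by (simp add: bij_betw_def)
  have "spanf sm n b \<subseteq> Y"
  proof
    fix x assume "x \<in> spanf sm n b"
    then obtain c where "x = lcomb sm n b c" unfolding spanf_def by blast
    then show "x \<in> Y" using subspace_lcomb[OF Y, of n b c] bY by simp
  qed
  then have ds: "d_span sm (b ` {..<n}) = Y"
    using d_span_as_spanf[OF bij] bs by simp
  have sub: "b ` {..<n} \<subseteq> Y" using bY by auto
  show ?thesis unfolding full_lattice_def
    by (rule exI[of _ "b ` {..<n}"]) (simp add: ds sub o_span_as_ocomb[OF bij])
qed

lemma full_lattice_sub: "subspace_r sm Y \<Longrightarrow> full_lattice sm \<nu> Y L \<Longrightarrow> L \<subseteq> Y"
proof -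
  assume Y: "subspace_r sm Y" and L: "full_lattice sm \<nu> Y L"
  then obtain S where S: "finite S" "S \<subseteq> Y" "L = o_span sm \<nu> S" unfolding full_lattice_def by blast
  obtain f where f: "bij_betw f {..<card S} S" using S(1) ex_bij_betw_nat_finite lessThan_atLeast0 by metis
  have "\<And>i. i < card S \<Longrightarrow> f i \<in> Y" using f S(2) bij_betwE by blast
  then show "L \<subseteq> Y" using S(3) o_span_as_ocomb[OF f] ocomb_sub_spanf subspace_lcomb[OF Y]
    unfolding spanf_def by blast
qed

lemma sum_lcomb: "(\<Sum>j<(N::nat). lcomb sm n u (g j)) = lcomb sm n u (\<lambda>i. \<Sum>j<N. g j i)"
proof (induction N)
  case 0 then show ?case by (simp add: lcomb_zero)
next
  case (Suc N) then show ?case by (simp add: lcomb_add)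
qed

lemma abs_le_dsum:
  fixes F :: "nat \<Rightarrow> nat \<Rightarrow> real"
  assumes "j < N" "i < n"
  shows "\<bar>F j i\<bar> \<le> (\<Sum>j<N. \<Sum>i<n. \<bar>F j i\<bar>)"
proof -
  have "\<bar>F j i\<bar> \<le> (\<Sum>i<n. \<bar>F j i\<bar>)" using assms(2) by (intro member_le_sum) auto
  also have "\<dots> \<le> (\<Sum>j<N. \<Sum>i<n. \<bar>F j i\<bar>)" using assms(1) by (intro member_le_sum) (auto intro: sum_nonneg)
  finally show ?thesis .
qed

lemma nu_lower: "(j::nat) < N \<Longrightarrow> (i::nat) < n \<Longrightarrow> ereal (- (\<Sum>j<N. \<Sum>i<n. \<bar>vr (F j i)\<bar>)) \<le> \<nu> (F j i)"
  using abs_le_dsum[of j N i n "\<lambda>j i. vr (F j i)"]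
  by (cases "F j i = 0") (auto simp: nu_vr)

lemma obasis:
  assumes Y: "subspace_r sm Y" and u: "is_basis sm Y n u" and L: "full_lattice sm \<nu> Y L"
  shows "\<exists>b. is_basis sm Y n b \<and> L = ocomb n b"
proof -
  have uY: "\<And>i. i < n \<Longrightarrow> u i \<in> Y" and ui: "indepf sm n u" and us: "Y \<subseteq> spanf sm n u"
    using u is_basis_iff by auto
  obtain S where S: "finite S" "S \<subseteq> Y" "L = o_span sm \<nu> S" "d_span sm S = Y" using L unfolding full_lattice_def by blast
  obtain f where f: "bij_betw f {..<card S} S" using S(1) ex_bij_betw_nat_finite lessThan_atLeast0 by metis
  define N where "N = card S"
  have fY: "\<And>j. j < N \<Longrightarrow> f j \<in> Y" using f S(2) bij_betwE N_def by blast
  have LN: "L = ocomb N f" using S(3) o_span_as_ocomb[OF f] N_def by simp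
  have YN: "Y = spanf sm N f" using S(4) d_span_as_spanf[OF f] N_def by simp
  have LY: "L \<subseteq> Y" using full_lattice_sub[OF Y L] .
  define cf where "cf = (\<lambda>j. SOME c. f j = lcomb sm n u c)"
  have cf: "f j = lcomb sm n u (cf j)" if "j < N" for j
  proof -
    have "\<exists>c. f j = lcomb sm n u c" using fY[OF that] us unfolding spanf_def by blast
    then show ?thesis unfolding cf_def by (rule someI_ex)
  qed
  define g where "g = (\<lambda>i. SOME c. u i = lcomb sm N f c)"
  have g: "u i = lcomb sm N f (g i)" if "i < n" for i
  proof -
    have "\<exists>c. u i = lcomb sm N f c" using uY[OF that] YN unfolding spanf_def by blast
    then show ?thesis unfolding g_def by (rule someI_ex)
  qed
  define B1 where "B1 = (\<Sum>j<N. \<Sum>i<n. \<bar>vr (cf j i)\<bar>)"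
  define B2 where "B2 = (\<Sum>i<n. \<Sum>j<N. \<bar>vr (g i j)\<bar>)"
  have bound: "\<forall>x\<in>L. \<forall>c. x = lcomb sm n u c \<longrightarrow> (\<forall>i<n. ereal (- B1) \<le> \<nu> (c i))"
  proof (intro ballI allI impI)
    fix x c i assume x: "x \<in> L" and c: "x = lcomb sm n u c" and i: "i < n"
    obtain d where d: "x = lcomb sm N f d" "\<forall>j<N. 0 \<le> \<nu> (d j)" using x LN unfolding ocomb_def by blast
    have "x = (\<Sum>j<N. sm (f j) (d j))" using d(1) unfolding lcomb_def .
    also have "\<dots> = (\<Sum>j<N. lcomb sm n u (\<lambda>i. cf j i * d j))"
      by (rule sum.cong) (auto simp: cf lcomb_sm)
    also have "\<dots> = lcomb sm n u (\<lambda>i. \<Sum>j<N. cf j i * d j)" by (rule sum_lcomb)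
    finally have "c i = (\<Sum>j<N. cf j i * d j)" using lcomb_uniq[OF ui] c i by metis
    moreover have "ereal (- B1) \<le> \<nu> (\<Sum>j<N. cf j i * d j)"
    proof (rule nu_sum_ge)
      fix j assume "j \<in> {..<N}"
      then show "ereal (- B1) \<le> \<nu> (cf j i * d j)"
        using nu_ge_mult[OF nu_lower[of j N i n cf]] d(2) i unfolding B1_def by simp
    qed
    ultimately show "ereal (- B1) \<le> \<nu> (c i)" by simp
  qed
  have full: "\<forall>i<n. \<forall>a. ereal B2 \<le> \<nu> a \<longrightarrow> sm (u i) a \<in> L"
  proof (intro allI impI)
    fix i a assume i: "i < n" and a: "ereal B2 \<le> \<nu> a"
    have "sm (u i) a = lcomb sm N f (\<lambda>j. g i j * a)" using g[OF i] lcomb_sm by simp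
    moreover have "\<forall>j<N. 0 \<le> \<nu> (g i j * a)"
    proof (intro allI impI)
      fix j assume j: "j < N"
      have "ereal (- B2) \<le> \<nu> (g i j)" using nu_lower[of i n j N g] i j unfolding B2_def by simp
      then show "0 \<le> \<nu> (g i j * a)" using nu_prod_nonneg a by blast
    qed
    ultimately show "sm (u i) a \<in> L" unfolding LN ocomb_def by blast
  qed
  have omL: "omod L" using LN omod_ocomb by simp
  have "L \<subseteq> spanf sm n u" using LY us by blast
  then obtain b where b: "indepf sm n b" "\<forall>j<n. b j \<in> L" "L = ocomb n b"
    using hermite[OF ui omL _ bound full] by blast
  have "Y \<subseteq> spanf sm n b"
  proof -
    have "u i \<in> spanf sm n b" if i: "i < n" for i
    proof -
      obtain M where M: "B2 \<le> real M * e" using big_pi by blast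
      have "ereal B2 \<le> \<nu> (\<pi> ^ M)" using nu_pow M by simp
      then have "sm (u i) (\<pi> ^ M) \<in> L" using full i by blast
      then have "sm (u i) (\<pi> ^ M) \<in> spanf sm n b" using b(3) ocomb_sub_spanf by blast
      then have "sm (sm (u i) (\<pi> ^ M)) (inverse (\<pi> ^ M)) \<in> spanf sm n b" by (rule spanf_sm)
      then show ?thesis using sm_inv[of "\<pi> ^ M" "u i"] pi_nz by simp
    qed
    then show ?thesis using us spanf_mono[of n u n b] by blast
  qed
  then have "is_basis sm Y n b" using b LY is_basis_iff by blast
  then show ?thesis using b(3) by blast
qed

end



context valsetting begin
lemma nu_pos_mult: "0 < \<nu> a \<Longrightarrow> 0 \<le> \<nu> b \<Longrightarrow> 0 < \<nu> (a * b)"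
  by (cases "a = 0"; cases "b = 0") (auto simp: nu_vr vr_mult zero_ereal_def)
lemma nu_pos_mult': "0 \<le> \<nu> a \<Longrightarrow> 0 < \<nu> b \<Longrightarrow> 0 < \<nu> (a * b)"
  by (cases "a = 0"; cases "b = 0") (auto simp: nu_vr vr_mult zero_ereal_def)
lemma nu_pi_pos: "0 < \<nu> \<pi>" using nu_pi e_pos by (simp add: zero_ereal_def)
lemma nu_conj_pi: "\<nu> (\<rho> (inverse \<pi>) * a * \<pi>) = \<nu> a"
proof (cases "a = 0")
  case False
  have "vr (\<rho> (inverse \<pi>) * a * \<pi>) = vr a"
    using False pi_nz by (simp add: vr_mult vr_rho vr_inverse)
  then show ?thesis using False pi_nz by (simp add: nu_vr)
qed simp
end

context hsetting begin

lemma hermite_basis: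
  fixes K K2 :: real
  assumes Y: "subspace_r sm Y" and u: "is_basis sm Y n u" and om: "omod X" and XY: "X \<subseteq> Y"
    and bd: "\<forall>x\<in>X. \<forall>c. x = lcomb sm n u c \<longrightarrow> (\<forall>i<n. ereal K \<le> \<nu> (c i))"
    and full: "\<forall>i<n. \<forall>a. ereal K2 \<le> \<nu> a \<longrightarrow> sm (u i) a \<in> X"
  shows "\<exists>g. is_basis sm Y n g \<and> X = ocomb n g"
proof -
  have uY: "\<And>i. i < n \<Longrightarrow> u i \<in> Y" and ui: "indepf sm n u" and us: "Y \<subseteq> spanf sm n u"
    using u is_basis_iff by auto
  obtain g where g: "indepf sm n g" "\<forall>j<n. g j \<in> X" "X = ocomb n g"
    using hermite[OF ui om _ bd full] XY us by blast
  have "Y \<subseteq> spanf sm n g"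
  proof -
    have "u i \<in> spanf sm n g" if i: "i < n" for i
    proof -
      obtain M where M: "K2 \<le> real M * e" using big_pi by blast
      have "ereal K2 \<le> \<nu> (\<pi> ^ M)" using nu_pow M by simp
      then have "sm (u i) (\<pi> ^ M) \<in> X" using full i by blast
      then have "sm (u i) (\<pi> ^ M) \<in> spanf sm n g" using g(3) ocomb_sub_spanf by blast
      then have "sm (sm (u i) (\<pi> ^ M)) (inverse (\<pi> ^ M)) \<in> spanf sm n g" by (rule spanf_sm)
      then show ?thesis using sm_inv[of "\<pi> ^ M" "u i"] pi_nz by simp
    qed
    then show ?thesis using us spanf_mono[of n u n g] by blast
  qed
  then have "is_basis sm Y n g" using g XY is_basis_iff by blast
  then show ?thesis using g(3) by blast
qed

lemma dual_coords:
  assumes v: "is_basis sm W n v" and w: "\<forall>j<n. w j \<in> W'" "\<forall>i<n. \<forall>j<n. h (v i) (w j) = (if i = j then 1 else 0)"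
  shows "y \<in> W' \<Longrightarrow> y = lcomb sm n w (\<lambda>j. h (v j) y)"
    and "h (v i) (lcomb sm n w c) = (if i < n then c i else h (v i) (lcomb sm n w c))"
    and "i < n \<Longrightarrow> h (w i) (lcomb sm n v c) = \<epsilon> * c i"
    and "i < n \<Longrightarrow> h (lcomb sm n v c) (w i) = \<rho> (c i)"
proof -
  have vW: "\<And>i. i < n \<Longrightarrow> v i \<in> W" and vs: "W \<subseteq> spanf sm n v" using v is_basis_iff by auto
  have hv: "h (v i) (lcomb sm n w c) = c i" if "i < n" for i c
  proof -
    have "h (v i) (lcomb sm n w c) = (\<Sum>j<n. (if i = j then c j else 0))"
      unfolding h_lcombR by (rule sum.cong) (use w that in auto)
    then show ?thesis using that by (simp add: sum.delta)
  qed
  then show "h (v i) (lcomb sm n w c) = (if i < n then c i else h (v i) (lcomb sm n w c))" by simp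
  show "y = lcomb sm n w (\<lambda>j. h (v j) y)" if y: "y \<in> W'"
  proof -
    define z where "z = y - lcomb sm n w (\<lambda>j. h (v j) y)"
    have zW: "z \<in> W'" unfolding z_def using W'_diff[OF y W'_lcomb] w by blast
    have "z = 0"
    proof (rule pairW'[OF zW])
      fix x assume "x \<in> W"
      then obtain c where x: "x = lcomb sm n v c" using vs unfolding spanf_def by blast
      have "h (v i) z = 0" if "i < n" for i unfolding z_def h_diffR using hv[OF that] by simp
      then show "h x z = 0" unfolding x h_lcombL by simp
    qed
    then show ?thesis unfolding z_def by simp
  qed
  show "h (w i) (lcomb sm n v c) = \<epsilon> * c i" if i: "i < n"
  proof -
    have "h (w i) (lcomb sm n v c) = (\<Sum>j<n. (if i = j then \<epsilon> * c j else 0))"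
      unfolding h_lcombR
    proof (rule sum.cong)
      fix j assume "j \<in> {..<n}"
      then show "h (w i) (v j) * c j = (if i = j then \<epsilon> * c j else 0)"
        using h_sym[of "w i" "v j"] w i by auto
    qed simp
    then show ?thesis using i by (simp add: sum.delta)
  qed
  show "h (lcomb sm n v c) (w i) = \<rho> (c i)" if i: "i < n"
  proof -
    have "h (lcomb sm n v c) (w i) = (\<Sum>j<n. (if i = j then \<rho> (c j) else 0))"
      unfolding h_lcombL by (rule sum.cong) (use w i in auto)
    then show ?thesis using i by (simp add: sum.delta)
  qed
qed

lemma dual_indep:
  assumes "\<forall>i<n. \<forall>j<n. h (v i) (w j) = (if i = j then 1 else 0)"
  shows "indepf sm n w"
  unfolding indepf_def
proof (intro allI impI)
  fix c i assume c: "lcomb sm n w c = 0" and i: "i < n"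
  have "h (v i) (lcomb sm n w c) = (\<Sum>j<n. (if i = j then c j else 0))"
    unfolding h_lcombR by (rule sum.cong) (use assms i in auto)
  then show "c i = 0" using c i by (simp add: sum.delta)
qed

lemma lcomb_split: "lcomb sm (n + m) u c = lcomb sm n u c + lcomb sm m (\<lambda>i. u (n + i)) (\<lambda>i. c (n + i))"
  by (induction m) (simp_all add: lcomb_Suc)

definition join :: "nat \<Rightarrow> (nat \<Rightarrow> 'v) \<Rightarrow> (nat \<Rightarrow> 'v) \<Rightarrow> nat \<Rightarrow> 'v" where
  "join n b g = (\<lambda>i. if i < n then b i else g (i - n))"

lemma lcomb_join: "lcomb sm (n + m) (join n b g) c = lcomb sm n b c + lcomb sm m g (\<lambda>i. c (n + i))"
  unfolding lcomb_split by (simp add: join_def cong: lcomb_cong)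

lemma join_basis:
  assumes b: "is_basis sm W n b" and g: "is_basis sm W' m g"
  shows "is_basis sm UNIV (n + m) (join n b g)"
proof -
  have bW: "\<And>i. i < n \<Longrightarrow> b i \<in> W" and bi: "indepf sm n b" and bs: "W \<subseteq> spanf sm n b"
    using b is_basis_iff by auto
  have gW: "\<And>i. i < m \<Longrightarrow> g i \<in> W'" and gi: "indepf sm m g" and gs: "W' \<subseteq> spanf sm m g"
    using g is_basis_iff by auto
  have "indepf sm (n + m) (join n b g)"
    unfolding indepf_def
  proof (intro allI impI)
    fix c i assume c: "lcomb sm (n + m) (join n b g) c = 0" and i: "i < n + m"
    have "lcomb sm n b c + lcomb sm m g (\<lambda>i. c (n + i)) = 0 + 0" using c lcomb_join by simp
    then have "lcomb sm n b c = 0 \<and> lcomb sm m g (\<lambda>i. c (n + i)) = 0"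
      using decomp_unique[OF W_lcomb W_0 W'_lcomb W'_0] bW gW by blast
    then show "c i = 0" using bi gi i unfolding indepf_def
      by (metis add_diff_inverse_nat add_less_cancel_left)
  qed
  moreover have "UNIV \<subseteq> spanf sm (n + m) (join n b g)"
  proof
    fix x :: 'v
    obtain c where c: "proj1 W W' x = lcomb sm n b c" using bs proj_props(1) unfolding spanf_def by blast
    obtain d where d: "proj2 W W' x = lcomb sm m g d" using gs proj_props(2) unfolding spanf_def by blast
    define cd where "cd = (\<lambda>i. if i < n then c i else d (i - n))"
    have "lcomb sm (n + m) (join n b g) cd = lcomb sm n b c + lcomb sm m g d"
      unfolding lcomb_join cd_def by (simp cong: lcomb_cong)
    then have "x = lcomb sm (n + m) (join n b g) cd" using c d proj_props(3)[of x] by simp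
    then show "x \<in> spanf sm (n + m) (join n b g)" unfolding spanf_def by blast
  qed
  ultimately show ?thesis using is_basis_iff by blast
qed

lemma ocomb_join: "ocomb (n + m) (join n b g) = {x + y | x y. x \<in> ocomb n b \<and> y \<in> ocomb m g}"
proof
  show "ocomb (n + m) (join n b g) \<subseteq> {x + y | x y. x \<in> ocomb n b \<and> y \<in> ocomb m g}"
  proof
    fix z assume "z \<in> ocomb (n + m) (join n b g)"
    then obtain c where c: "z = lcomb sm (n + m) (join n b g) c" "\<forall>i<n+m. 0 \<le> \<nu> (c i)" unfolding ocomb_def by blast
    have "lcomb sm n b c \<in> ocomb n b" using c(2) unfolding ocomb_def by force
    moreover have "lcomb sm m g (\<lambda>i. c (n + i)) \<in> ocomb m g" using c(2) unfolding ocomb_def by force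
    ultimately show "z \<in> {x + y | x y. x \<in> ocomb n b \<and> y \<in> ocomb m g}" using c(1) lcomb_join by blast
  qed
next
  show "{x + y | x y. x \<in> ocomb n b \<and> y \<in> ocomb m g} \<subseteq> ocomb (n + m) (join n b g)"
  proof
    fix z assume "z \<in> {x + y | x y. x \<in> ocomb n b \<and> y \<in> ocomb m g}"
    then obtain c d where cd: "z = lcomb sm n b c + lcomb sm m g d" "\<forall>i<n. 0 \<le> \<nu> (c i)" "\<forall>i<m. 0 \<le> \<nu> (d i)"
      unfolding ocomb_def by blast
    define f where "f = (\<lambda>i. if i < n then c i else d (i - n))"
    have "z = lcomb sm (n + m) (join n b g) f" unfolding lcomb_join f_def cd(1) by (simp cong: lcomb_cong)
    moreover have "\<forall>i<n+m. 0 \<le> \<nu> (f i)" using cd unfolding f_def by auto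
    ultimately show "z \<in> ocomb (n + m) (join n b g)" unfolding ocomb_def by blast
  qed
qed

end



context hsetting begin

lemma nu_eps[simp]: "\<nu> \<epsilon> = 0" using nu_vr[OF eps_nz] by (simp add: zero_ereal_def)

lemma dualW_sub: "dual_in \<nu> h W' M \<subseteq> W'" unfolding dual_in_def by blast

lemma lat_dual_W': "lat_dual \<nu> h W' \<Lambda> t \<subseteq> W'" unfolding lat_dual_def using dualW_sub by blast

lemma omod_dual: "omod (dual_in \<nu> h W' M)"
  unfolding omod_def dual_in_def
proof (intro conjI ballI allI impI)
  show "0 \<in> {y \<in> W'. \<forall>m\<in>M. h y m \<in> pD \<nu>}" by simp
next
  fix x y assume "x \<in> {y \<in> W'. \<forall>m\<in>M. h y m \<in> pD \<nu>}" "y \<in> {y \<in> W'. \<forall>m\<in>M. h y m \<in> pD \<nu>}"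
  then show "x + y \<in> {y \<in> W'. \<forall>m\<in>M. h y m \<in> pD \<nu>}" by (auto simp: W'_add h_addL pD_add)
next
  fix x a assume x: "x \<in> {y \<in> W'. \<forall>m\<in>M. h y m \<in> pD \<nu>}" and a: "0 \<le> \<nu> a"
  have "h (sm x a) m \<in> pD \<nu>" if "m \<in> M" for m
    using x that a nu_pos_mult'[of "\<rho> a" "h x m"] unfolding h_smL pD_def by simp
  then show "sm x a \<in> {y \<in> W'. \<forall>m\<in>M. h y m \<in> pD \<nu>}" using x W'_sm by simp
qed

context
  fixes \<Lambda> :: "real \<Rightarrow> 'v set"
  assumes LF: "lattice_fun sm \<nu> \<pi> W \<Lambda>"
begin

lemma LF1: "full_lattice sm \<nu> W (\<Lambda> r)" using LF unfolding lattice_fun_def by blast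
lemma LF2: "\<Lambda> (r + e) = (\<lambda>m. sm m \<pi>) ` \<Lambda> r" using LF unfolding lattice_fun_def e_def by blast
lemma LF3: "r \<le> s \<Longrightarrow> \<Lambda> s \<subseteq> \<Lambda> r" using LF unfolding lattice_fun_def by blast
lemma LF4: "\<Lambda> r = (\<Inter>s\<in>{..<r}. \<Lambda> s)" using LF unfolding lattice_fun_def by blast
lemma LW: "\<Lambda> r \<subseteq> W" using full_lattice_sub[OF subW LF1] .

lemma Lob: "\<exists>n b. is_basis sm W n b \<and> \<Lambda> r = ocomb n b"
  using obasis[OF subW _ LF1] basis_W by blast

lemma L0: "0 \<in> \<Lambda> r"
  using Lob[of r] omod_ocomb unfolding omod_def by blast

abbreviation "Nun t \<equiv> (\<Union>s\<in>{-t<..}. \<Lambda> s)"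

lemma Nun_sub: "Nun t \<subseteq> \<Lambda> (- t)"
proof (rule UN_least)
  fix s assume "s \<in> {- t<..}"
  then show "\<Lambda> s \<subseteq> \<Lambda> (- t)" using LF3[of "- t" s] by simp
qed

lemma ldual_full: "full_lattice sm \<nu> W' (lat_dual \<nu> h W' \<Lambda> t)"
proof -
  obtain n b where b: "is_basis sm W n b" "\<Lambda> (- t) = ocomb n b" using Lob by blast
  obtain w where w: "\<forall>j<n. w j \<in> W'" "\<forall>i<n. \<forall>j<n. h (b i) (w j) = (if i = j then 1 else 0)"
    using dual_basis[OF b(1)] by blast
  note dc = dual_coords[OF b(1) w]
  have wind: "indepf sm n w" using dual_indep[OF w(2)] .
  have wbasis: "is_basis sm W' n w" using w(1) wind dc(1) unfolding is_basis_iff spanf_def by blast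
  define X where "X = lat_dual \<nu> h W' \<Lambda> t"
  have XD: "X = dual_in \<nu> h W' (Nun t)" unfolding X_def lat_dual_def by simp
  have sub1: "\<Lambda> (- t + e) \<subseteq> Nun t"
  proof
    fix x assume "x \<in> \<Lambda> (- t + e)"
    then show "x \<in> Nun t" using e_pos by (intro UN_I[of "- t + e"]) auto
  qed
  have "\<exists>g. is_basis sm W' n g \<and> X = ocomb n g"
  proof (rule hermite_basis[OF subW' wbasis])
    show "omod X" unfolding XD by (rule omod_dual)
    show "X \<subseteq> W'" unfolding XD by (rule dualW_sub)
    show "\<forall>x\<in>X. \<forall>c. x = lcomb sm n w c \<longrightarrow> (\<forall>i<n. ereal (- e) \<le> \<nu> (c i))"
    proof (intro ballI allI impI)
      fix x c i assume x: "x \<in> X" and c: "x = lcomb sm n w c" and i: "i < n"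
      have "h (b i) x = c i" using dc(2)[of i c] i c by simp
      have "b i \<in> \<Lambda> (- t)" using b(2) ocomb_gen[OF i, of 1 b] by simp
      then have "sm (b i) \<pi> \<in> \<Lambda> (- t + e)" using LF2 by blast
      then have "h x (sm (b i) \<pi>) \<in> pD \<nu>" using x sub1 unfolding XD dual_in_def by blast
      then have "0 < \<nu> (\<epsilon> * \<rho> (c i) * \<pi>)"
        using h_sym[of x "b i"] \<open>h (b i) x = c i\<close> unfolding h_smR pD_def by simp
      then have "0 < \<nu> (c i) + ereal e" using nu_mult nu_pi eps_nz by (simp add: nu_vr)
      then show "ereal (- e) \<le> \<nu> (c i)"
        by (cases "\<nu> (c i)") (auto simp: zero_ereal_def)
    qed
    show "\<forall>i<n. \<forall>a. ereal e \<le> \<nu> a \<longrightarrow> sm (w i) a \<in> X"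
    proof (intro allI impI)
      fix i a assume i: "i < n" and a: "ereal e \<le> \<nu> a"
      have apos: "0 < \<nu> a" using a e_pos by (metis ereal_less(2) less_le_trans zero_ereal_def)
      have "h (sm (w i) a) m \<in> pD \<nu>" if "m \<in> Nun t" for m
      proof -
        have "m \<in> ocomb n b" using that Nun_sub b(2) by blast
        then obtain d where d: "m = lcomb sm n b d" "\<forall>j<n. 0 \<le> \<nu> (d j)" unfolding ocomb_def by blast
        have "h (sm (w i) a) m = \<rho> a * (\<epsilon> * d i)" using dc(3)[OF i] d(1) h_smL by simp
        moreover have "0 < \<nu> (\<rho> a * (\<epsilon> * d i))"
          using nu_pos_mult[of "\<rho> a" "\<epsilon> * d i"] apos d(2) i by (simp add: nu_mult)
        ultimately show ?thesis unfolding pD_def by simp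
      qed
      then show "sm (w i) a \<in> X" unfolding XD dual_in_def using W'_sm w(1) i by blast
    qed
  qed
  then obtain g where g: "is_basis sm W' n g" "X = ocomb n g" by blast
  then show ?thesis using basis_full_lattice[OF subW' g(1)] X_def by simp
qed

lemma bidual:
  assumes w: "w \<in> W" and H: "\<And>s m'. s > - t \<Longrightarrow> m' \<in> lat_dual \<nu> h W' \<Lambda> s \<Longrightarrow> h w m' \<in> pD \<nu>"
  shows "w \<in> \<Lambda> t"
proof (rule ccontr)
  assume "w \<notin> \<Lambda> t"
  then obtain u0 where u0: "u0 < t" "w \<notin> \<Lambda> u0" using LF4[of t] by blast
  obtain n b where b: "is_basis sm W n b" "\<Lambda> u0 = ocomb n b" using Lob by blast
  obtain v where v: "\<forall>j<n. v j \<in> W'" "\<forall>i<n. \<forall>j<n. h (b i) (v j) = (if i = j then 1 else 0)"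
    using dual_basis[OF b(1)] by blast
  note dc = dual_coords[OF b(1) v]
  obtain c where c: "w = lcomb sm n b c" using w b(1) unfolding is_basis_iff spanf_def by blast
  obtain j where j: "j < n" "\<not> 0 \<le> \<nu> (c j)" using u0(2) b(2) c unfolding ocomb_def by blast
  have cj: "c j \<noteq> 0" using j(2) by auto
  have "vr (c j) < 0" using j(2) nu_vr[OF cj] by (simp add: zero_ereal_def)
  then have vle: "vr (c j) \<le> - e" using vr_neg_le cj by blast
  define m' where "m' = sm (v j) \<pi>"
  have "m' \<in> lat_dual \<nu> h W' \<Lambda> (- u0)"
    unfolding lat_dual_def dual_in_def
  proof (intro CollectI conjI ballI)
    show "m' \<in> W'" unfolding m'_def using W'_sm v(1) j by blast
  next
    fix m assume "m \<in> Nun (- u0)"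
    then obtain s where "s > u0" "m \<in> \<Lambda> s" by auto
    then have "m \<in> \<Lambda> u0" using LF3[of u0 s] by auto
    then have "m \<in> ocomb n b" using b(2) by simp
    then obtain d where d: "m = lcomb sm n b d" "\<forall>i<n. 0 \<le> \<nu> (d i)" unfolding ocomb_def by blast
    have "h m' m = \<rho> \<pi> * (\<epsilon> * d j)" unfolding m'_def h_smL using dc(3)[OF j(1)] d(1) by simp
    moreover have "0 < \<nu> (\<rho> \<pi> * (\<epsilon> * d j))"
      using nu_pos_mult[of "\<rho> \<pi>" "\<epsilon> * d j"] nu_pi_pos d(2) j(1) by (simp add: nu_mult)
    ultimately show "h m' m \<in> pD \<nu>" unfolding pD_def by simp
  qed
  then have "h w m' \<in> pD \<nu>" using H[of "- u0" m'] u0(1) by simp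
  moreover have "h w m' = \<rho> (c j) * \<pi>" unfolding m'_def h_smR using dc(4)[OF j(1)] c by simp
  moreover have "\<not> 0 < \<nu> (\<rho> (c j) * \<pi>)"
    using vle cj pi_nz by (simp add: nu_vr vr_mult vr_rho vr_pi zero_ereal_def)
  ultimately show False unfolding pD_def by simp
qed

lemma phi_decomp:
  "x \<in> phi \<nu> h W' \<Lambda> t \<longleftrightarrow> proj1 W W' x \<in> \<Lambda> t \<and> proj2 W W' x \<in> lat_dual \<nu> h W' \<Lambda> t"
proof
  assume "x \<in> phi \<nu> h W' \<Lambda> t"
  then obtain a y where "x = a + y" "a \<in> \<Lambda> t" "y \<in> lat_dual \<nu> h W' \<Lambda> t" unfolding phi_def by blast
  moreover then have "a \<in> W" "y \<in> W'" using LW lat_dual_W' by blast+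
  ultimately show "proj1 W W' x \<in> \<Lambda> t \<and> proj2 W W' x \<in> lat_dual \<nu> h W' \<Lambda> t"
    using proj1_eq proj2_eq by simp
next
  assume "proj1 W W' x \<in> \<Lambda> t \<and> proj2 W W' x \<in> lat_dual \<nu> h W' \<Lambda> t"
  then show "x \<in> phi \<nu> h W' \<Lambda> t" unfolding phi_def using proj_props(3)[of x] by blast
qed

lemma ldual_0: "0 \<in> lat_dual \<nu> h W' \<Lambda> t"
  unfolding lat_dual_def dual_in_def by simp

lemma self_dual: "lat_dual \<nu> h UNIV (phi \<nu> h W' \<Lambda>) t = phi \<nu> h W' \<Lambda> t"
proof
  show "lat_dual \<nu> h UNIV (phi \<nu> h W' \<Lambda>) t \<subseteq> phi \<nu> h W' \<Lambda> t"
  proof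
    fix x assume x: "x \<in> lat_dual \<nu> h UNIV (phi \<nu> h W' \<Lambda>) t"
    then have X: "\<And>s m. s > - t \<Longrightarrow> m \<in> phi \<nu> h W' \<Lambda> s \<Longrightarrow> h x m \<in> pD \<nu>"
      unfolding lat_dual_def dual_in_def by auto
    define a where "a = proj1 W W' x"
    define y where "y = proj2 W W' x"
    have aW: "a \<in> W" and yW: "y \<in> W'" and xa: "x = a + y" using proj_props a_def y_def by auto
    have "y \<in> lat_dual \<nu> h W' \<Lambda> t"
      unfolding lat_dual_def dual_in_def
    proof (intro CollectI conjI ballI)
      show "y \<in> W'" by (rule yW)
      fix m assume "m \<in> Nun t"
      then obtain s where s: "s > - t" "m \<in> \<Lambda> s" by auto
      have "m \<in> phi \<nu> h W' \<Lambda> s" unfolding phi_def using s(2) ldual_0 by force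
      then have "h x m \<in> pD \<nu>" using X s(1) by blast
      moreover have "h a m = 0" using isoW aW LW s(2) by blast
      ultimately show "h y m \<in> pD \<nu>" unfolding xa h_addL by simp
    qed
    moreover have "a \<in> \<Lambda> t"
    proof (rule bidual[OF aW])
      fix s m' assume s: "s > - t" and m': "m' \<in> lat_dual \<nu> h W' \<Lambda> s"
      have "m' \<in> phi \<nu> h W' \<Lambda> s" unfolding phi_def using m' L0 by force
      then have "h x m' \<in> pD \<nu>" using X s by blast
      moreover have "h y m' = 0" using isoW' yW lat_dual_W' m' by blast
      ultimately show "h a m' \<in> pD \<nu>" unfolding xa h_addL by simp
    qed
    ultimately show "x \<in> phi \<nu> h W' \<Lambda> t" unfolding phi_def xa by blast
  qed
next
  show "phi \<nu> h W' \<Lambda> t \<subseteq> lat_dual \<nu> h UNIV (phi \<nu> h W' \<Lambda>) t"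
  proof
    fix x assume "x \<in> phi \<nu> h W' \<Lambda> t"
    then obtain a y where xa: "x = a + y" and a: "a \<in> \<Lambda> t" and y: "y \<in> lat_dual \<nu> h W' \<Lambda> t"
      unfolding phi_def by blast
    have aW: "a \<in> W" using a LW by blast
    have yW: "y \<in> W'" using y lat_dual_W' by blast
    have "h x m \<in> pD \<nu>" if s: "s > - t" and m: "m \<in> phi \<nu> h W' \<Lambda> s" for s m
    proof -
      obtain a2 y2 where m2: "m = a2 + y2" "a2 \<in> \<Lambda> s" "y2 \<in> lat_dual \<nu> h W' \<Lambda> s"
        using m unfolding phi_def by blast
      have a2W: "a2 \<in> W" using m2(2) LW by blast
      have y2W: "y2 \<in> W'" using m2(3) lat_dual_W' by blast
      have "h y a2 \<in> pD \<nu>" using y m2(2) s unfolding lat_dual_def dual_in_def by auto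
      moreover have "h y2 a \<in> pD \<nu>" using m2(3) a s unfolding lat_dual_def dual_in_def by auto
      then have "h a y2 \<in> pD \<nu>" using h_sym[of a y2] by (simp add: pD_def nu_mult nu_vr zero_ereal_def)
      moreover have "h a a2 = 0" using isoW aW a2W by blast
      moreover have "h y y2 = 0" using isoW' yW y2W by blast
      ultimately show ?thesis unfolding xa m2(1) h_addL h_addR by (simp add: pD_add)
    qed
    then show "x \<in> lat_dual \<nu> h UNIV (phi \<nu> h W' \<Lambda>) t" unfolding lat_dual_def dual_in_def by blast
  qed
qed

lemma phi_full: "full_lattice sm \<nu> UNIV (phi \<nu> h W' \<Lambda> r)"
proof -
  obtain n b where b: "is_basis sm W n b" "\<Lambda> r = ocomb n b" using Lob by blast
  obtain m g where g: "is_basis sm W' m g" "lat_dual \<nu> h W' \<Lambda> r = ocomb m g"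
    using obasis[OF subW' _ ldual_full] basis_W' by blast
  have "phi \<nu> h W' \<Lambda> r = ocomb (n + m) (join n b g)"
    unfolding ocomb_join phi_def b(2) g(2) by simp
  moreover have sub: "subspace_r sm (UNIV :: 'v set)" unfolding subspace_r_def by simp
  ultimately show ?thesis using basis_full_lattice[OF sub join_basis[OF b(1) g(1)]] by simp
qed

lemma Nun_shift: "m \<in> Nun (r + e) \<longleftrightarrow> sm m \<pi> \<in> Nun r"
proof
  assume "m \<in> Nun (r + e)"
  then obtain s where s: "s > - (r + e)" "m \<in> \<Lambda> s" by auto
  then have "sm m \<pi> \<in> \<Lambda> (s + e)" using LF2 by blast
  moreover have "s + e > - r" using s(1) by simp
  ultimately show "sm m \<pi> \<in> Nun r" by auto
next
  assume "sm m \<pi> \<in> Nun r"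
  then obtain s where s: "s > - r" "sm m \<pi> \<in> \<Lambda> s" by auto
  have "\<Lambda> s = (\<lambda>m. sm m \<pi>) ` \<Lambda> (s - e)" using LF2[of "s - e"] by simp
  then obtain m2 where m2: "m2 \<in> \<Lambda> (s - e)" "sm m \<pi> = sm m2 \<pi>" using s(2) by auto
  then have "sm (sm m \<pi>) (inverse \<pi>) = sm (sm m2 \<pi>) (inverse \<pi>)" by simp
  then have "m = m2" unfolding sm_inv[OF pi_nz] .
  moreover have "s - e > - (r + e)" using s(1) by simp
  ultimately show "m \<in> Nun (r + e)" using m2(1) by auto
qed

lemma ldual_shift: "lat_dual \<nu> h W' \<Lambda> (r + e) = (\<lambda>m. sm m \<pi>) ` lat_dual \<nu> h W' \<Lambda> r"
proof -
  have key: "y \<in> lat_dual \<nu> h W' \<Lambda> (r + e) \<longleftrightarrow> sm y (inverse \<pi>) \<in> lat_dual \<nu> h W' \<Lambda> r" if yW: "y \<in> W'" for y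
  proof -
    have "y \<in> lat_dual \<nu> h W' \<Lambda> (r + e) \<longleftrightarrow> (\<forall>m. m \<in> Nun (r + e) \<longrightarrow> 0 < \<nu> (h y m))"
      unfolding lat_dual_def dual_in_def pD_def using yW by auto
    also have "\<dots> \<longleftrightarrow> (\<forall>m'. m' \<in> Nun r \<longrightarrow> 0 < \<nu> (h (sm y (inverse \<pi>)) m'))"
    proof
      assume A: "\<forall>m. m \<in> Nun (r + e) \<longrightarrow> 0 < \<nu> (h y m)"
      show "\<forall>m'. m' \<in> Nun r \<longrightarrow> 0 < \<nu> (h (sm y (inverse \<pi>)) m')"
      proof (intro allI impI)
        fix m' assume m': "m' \<in> Nun r"
        define m where "m = sm m' (inverse \<pi>)"
        have mm: "sm m \<pi> = m'" unfolding m_def by (simp flip: sm_mult add: pi_nz)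
        then have "m \<in> Nun (r + e)" using Nun_shift m' by simp
        then have "0 < \<nu> (h y m)" using A by blast
        moreover have "h (sm y (inverse \<pi>)) m' = \<rho> (inverse \<pi>) * h y m * \<pi>"
          unfolding h_smL mm[symmetric] h_smR by (simp add: mult.assoc)
        ultimately show "0 < \<nu> (h (sm y (inverse \<pi>)) m')" using nu_conj_pi by simp
      qed
    next
      assume B: "\<forall>m'. m' \<in> Nun r \<longrightarrow> 0 < \<nu> (h (sm y (inverse \<pi>)) m')"
      show "\<forall>m. m \<in> Nun (r + e) \<longrightarrow> 0 < \<nu> (h y m)"
      proof (intro allI impI)
        fix m assume "m \<in> Nun (r + e)"
        then have "sm m \<pi> \<in> Nun r" using Nun_shift by simp
        then have "0 < \<nu> (h (sm y (inverse \<pi>)) (sm m \<pi>))" using B by blast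
        moreover have "h (sm y (inverse \<pi>)) (sm m \<pi>) = \<rho> (inverse \<pi>) * h y m * \<pi>"
          unfolding h_smL h_smR by (simp add: mult.assoc)
        ultimately show "0 < \<nu> (h y m)" using nu_conj_pi by simp
      qed
    qed
    also have "\<dots> \<longleftrightarrow> sm y (inverse \<pi>) \<in> lat_dual \<nu> h W' \<Lambda> r"
      unfolding lat_dual_def dual_in_def pD_def using W'_sm[OF yW] by auto
    finally show ?thesis .
  qed
  show ?thesis
  proof
    show "lat_dual \<nu> h W' \<Lambda> (r + e) \<subseteq> (\<lambda>m. sm m \<pi>) ` lat_dual \<nu> h W' \<Lambda> r"
    proof
      fix y assume y: "y \<in> lat_dual \<nu> h W' \<Lambda> (r + e)"
      then have yW: "y \<in> W'" using lat_dual_W' by blast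
      then have "sm y (inverse \<pi>) \<in> lat_dual \<nu> h W' \<Lambda> r" using key y by blast
      moreover have "y = sm (sm y (inverse \<pi>)) \<pi>" by (simp flip: sm_mult add: pi_nz)
      ultimately show "y \<in> (\<lambda>m. sm m \<pi>) ` lat_dual \<nu> h W' \<Lambda> r" by blast
    qed
  next
    show "(\<lambda>m. sm m \<pi>) ` lat_dual \<nu> h W' \<Lambda> r \<subseteq> lat_dual \<nu> h W' \<Lambda> (r + e)"
    proof
      fix y assume "y \<in> (\<lambda>m. sm m \<pi>) ` lat_dual \<nu> h W' \<Lambda> r"
      then obtain z where z: "z \<in> lat_dual \<nu> h W' \<Lambda> r" "y = sm z \<pi>" by blast
      have zW: "z \<in> W'" using z(1) lat_dual_W' by blast
      have yW: "y \<in> W'" using z(2) W'_sm[OF zW] by simp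
      have "sm y (inverse \<pi>) = z" using z(2) sm_inv[OF pi_nz] by simp
      then show "y \<in> lat_dual \<nu> h W' \<Lambda> (r + e)" using key[OF yW] z(1) by simp
    qed
  qed
qed

lemma phi_shift: "phi \<nu> h W' \<Lambda> (r + e) = (\<lambda>m. sm m \<pi>) ` phi \<nu> h W' \<Lambda> r"
proof
  show "phi \<nu> h W' \<Lambda> (r + e) \<subseteq> (\<lambda>m. sm m \<pi>) ` phi \<nu> h W' \<Lambda> r"
  proof
    fix x assume "x \<in> phi \<nu> h W' \<Lambda> (r + e)"
    then obtain a y where x: "x = a + y" "a \<in> \<Lambda> (r + e)" "y \<in> lat_dual \<nu> h W' \<Lambda> (r + e)"
      unfolding phi_def by blast
    obtain a0 where a0: "a0 \<in> \<Lambda> r" "a = sm a0 \<pi>" using x(2) LF2 by blast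
    obtain y0 where y0: "y0 \<in> lat_dual \<nu> h W' \<Lambda> r" "y = sm y0 \<pi>" using x(3) ldual_shift by blast
    have "x = sm (a0 + y0) \<pi>" using x(1) a0(2) y0(2) sm_addL by simp
    moreover have "a0 + y0 \<in> phi \<nu> h W' \<Lambda> r" unfolding phi_def using a0(1) y0(1) by blast
    ultimately show "x \<in> (\<lambda>m. sm m \<pi>) ` phi \<nu> h W' \<Lambda> r" by blast
  qed
next
  show "(\<lambda>m. sm m \<pi>) ` phi \<nu> h W' \<Lambda> r \<subseteq> phi \<nu> h W' \<Lambda> (r + e)"
  proof
    fix x assume "x \<in> (\<lambda>m. sm m \<pi>) ` phi \<nu> h W' \<Lambda> r"
    then obtain a y where x: "x = sm (a + y) \<pi>" "a \<in> \<Lambda> r" "y \<in> lat_dual \<nu> h W' \<Lambda> r"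
      unfolding phi_def by blast
    have "sm a \<pi> \<in> \<Lambda> (r + e)" using x(2) LF2 by blast
    moreover have "sm y \<pi> \<in> lat_dual \<nu> h W' \<Lambda> (r + e)" using x(3) ldual_shift by blast
    moreover have "x = sm a \<pi> + sm y \<pi>" using x(1) sm_addL by simp
    ultimately show "x \<in> phi \<nu> h W' \<Lambda> (r + e)" unfolding phi_def by blast
  qed
qed

lemma ldual_mono: "r \<le> s \<Longrightarrow> lat_dual \<nu> h W' \<Lambda> s \<subseteq> lat_dual \<nu> h W' \<Lambda> r"
  unfolding lat_dual_def dual_in_def by auto

lemma phi_mono: "r \<le> s \<Longrightarrow> phi \<nu> h W' \<Lambda> s \<subseteq> phi \<nu> h W' \<Lambda> r"
  unfolding phi_def using LF3 ldual_mono by blast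

lemma phi_cont: "phi \<nu> h W' \<Lambda> r = (\<Inter>s\<in>{..<r}. phi \<nu> h W' \<Lambda> s)"
proof
  show "phi \<nu> h W' \<Lambda> r \<subseteq> (\<Inter>s\<in>{..<r}. phi \<nu> h W' \<Lambda> s)"
  proof (rule INT_greatest)
    fix s assume "s \<in> {..<r}"
    then show "phi \<nu> h W' \<Lambda> r \<subseteq> phi \<nu> h W' \<Lambda> s" using phi_mono[of s r] by simp
  qed
next
  show "(\<Inter>s\<in>{..<r}. phi \<nu> h W' \<Lambda> s) \<subseteq> phi \<nu> h W' \<Lambda> r"
  proof
    fix x assume x: "x \<in> (\<Inter>s\<in>{..<r}. phi \<nu> h W' \<Lambda> s)"
    then have x': "\<And>s. s < r \<Longrightarrow> proj1 W W' x \<in> \<Lambda> s \<and> proj2 W W' x \<in> lat_dual \<nu> h W' \<Lambda> s"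
      using phi_decomp by blast
    have "proj1 W W' x \<in> \<Lambda> r" using x' LF4[of r] by blast
    moreover have "proj2 W W' x \<in> lat_dual \<nu> h W' \<Lambda> r"
      unfolding lat_dual_def dual_in_def
    proof (intro CollectI conjI ballI)
      show "proj2 W W' x \<in> W'" by (rule proj_props)
      fix m assume "m \<in> Nun r"
      then obtain u where u: "u > - r" "m \<in> \<Lambda> u" by auto
      define s where "s = (r - u) / 2"
      have "s < r" "u > - s" using u(1) s_def by auto
      then have "proj2 W W' x \<in> lat_dual \<nu> h W' \<Lambda> s" using x' by blast
      then show "h (proj2 W W' x) m \<in> pD \<nu>" using u(2) \<open>u > - s\<close> unfolding lat_dual_def dual_in_def by auto
    qed
    ultimately show "x \<in> phi \<nu> h W' \<Lambda> r" using phi_decomp by blast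
  qed
qed

lemma part1: "self_dual_lattice_fun sm \<nu> \<pi> h (phi \<nu> h W' \<Lambda>)"
proof -
  have "lattice_fun sm \<nu> \<pi> UNIV (phi \<nu> h W' \<Lambda>)"
    unfolding lattice_fun_def
  proof (intro conjI allI impI)
    fix r show "full_lattice sm \<nu> UNIV (phi \<nu> h W' \<Lambda> r)" by (rule phi_full)
  next
    fix r show "phi \<nu> h W' \<Lambda> (r + real_of_ereal (\<nu> \<pi>)) = (\<lambda>m. sm m \<pi>) ` phi \<nu> h W' \<Lambda> r"
      using phi_shift[of r] unfolding e_def .
  next
    fix r s :: real assume "r \<le> s" then show "phi \<nu> h W' \<Lambda> s \<subseteq> phi \<nu> h W' \<Lambda> r" by (rule phi_mono)
  next
    fix r show "phi \<nu> h W' \<Lambda> r = (\<Inter>s\<in>{..<r}. phi \<nu> h W' \<Lambda> s)" by (rule phi_cont)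
  qed
  moreover have "lat_dual \<nu> h UNIV (phi \<nu> h W' \<Lambda>) = phi \<nu> h W' \<Lambda>"
    by (rule ext) (rule self_dual)
  ultimately show ?thesis unfolding self_dual_lattice_fun_def by blast
qed

end
end



context hsetting begin

lemma affine_dual:
  assumes v: "is_basis sm W n v"
  shows "\<exists>w2. is_basis sm W' n w2 \<and> (\<forall>i<n. \<forall>j<n. h (w2 j) (v i) = (if i = j then 1 else 0))"
proof -
  obtain w where w: "\<forall>j<n. w j \<in> W'" "\<forall>i<n. \<forall>j<n. h (v i) (w j) = (if i = j then 1 else 0)"
    using dual_basis[OF v] by blast
  note dc = dual_coords[OF v w]
  define w2 where "w2 = (\<lambda>j. sm (w j) \<epsilon>)"
  have hw2: "\<forall>i<n. \<forall>j<n. h (w2 j) (v i) = (if i = j then 1 else 0)"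
  proof (intro allI impI)
    fix i j assume "i < n" "j < n"
    then show "h (w2 j) (v i) = (if i = j then 1 else 0)"
      unfolding w2_def h_smL using h_sym[of "w j" "v i"] w(2) by (simp add: mult.assoc[symmetric])
  qed
  have w2W: "\<forall>j<n. w2 j \<in> W'" unfolding w2_def using w(1) W'_sm by blast
  have "indepf sm n w2"
    unfolding indepf_def
  proof (intro allI impI)
    fix c i assume c: "lcomb sm n w2 c = 0" and i: "i < n"
    have "h (lcomb sm n w2 c) (v i) = (\<Sum>j<n. (if i = j then \<rho> (c j) else 0))"
      unfolding h_lcombL by (rule sum.cong) (use hw2 i in auto)
    then show "c i = 0" using c i by (simp add: sum.delta)
  qed
  moreover have "W' \<subseteq> spanf sm n w2"
  proof
    fix y assume y: "y \<in> W'"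
    have "y = lcomb sm n w (\<lambda>j. h (v j) y)" using dc(1)[OF y] .
    also have "\<dots> = lcomb sm n w2 (\<lambda>j. \<epsilon> * h (v j) y)"
      unfolding w2_def by (rule lcomb_cong) (simp flip: sm_mult add: mult.assoc[symmetric])
    finally show "y \<in> spanf sm n w2" unfolding spanf_def by blast
  qed
  ultimately show ?thesis using w2W hw2 is_basis_iff by blast
qed

lemma splits_lcomb: "splits sm \<nu> n v \<alpha> \<Lambda> \<longleftrightarrow> (\<forall>x. \<Lambda> x = {lcomb sm n v \<delta> | \<delta>. \<forall>i<n. ereal (x - \<alpha> i) \<le> \<nu> (\<delta> i)})"
  unfolding splits_def lcomb_def by simp

lemma dual_split:
  assumes v: "is_basis sm W n v" and w2: "is_basis sm W' n w2"
    and hw2: "\<forall>i<n. \<forall>j<n. h (w2 j) (v i) = (if i = j then 1 else 0)"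
    and sp: "splits sm \<nu> n v \<alpha> \<Lambda>"
  shows "lat_dual \<nu> h W' \<Lambda> x = {lcomb sm n w2 \<delta> | \<delta>. \<forall>i<n. ereal (x - (- \<alpha> i)) \<le> \<nu> (\<delta> i)}"
proof -
  have spl: "\<And>s. \<Lambda> s = {lcomb sm n v \<gamma> | \<gamma>. \<forall>i<n. ereal (s - \<alpha> i) \<le> \<nu> (\<gamma> i)}"
    using sp splits_lcomb by blast
  have hc: "h (lcomb sm n w2 c) (lcomb sm n v \<gamma>) = (\<Sum>i<n. \<rho> (c i) * \<gamma> i)" for c \<gamma>
  proof -
    have "h (lcomb sm n w2 c) (v i) = \<rho> (c i)" if i: "i < n" for i
    proof -
      have "h (lcomb sm n w2 c) (v i) = (\<Sum>j<n. (if i = j then \<rho> (c j) else 0))"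
        unfolding h_lcombL by (rule sum.cong) (use hw2 i in auto)
      then show ?thesis using i by (simp add: sum.delta)
    qed
    then show ?thesis unfolding h_lcombR by simp
  qed
  have w2W: "\<And>j. j < n \<Longrightarrow> w2 j \<in> W'" and w2s: "W' \<subseteq> spanf sm n w2" using w2 is_basis_iff by auto
  have cond: "(\<forall>m\<in>(\<Union>s\<in>{-x<..}. \<Lambda> s). h (lcomb sm n w2 c) m \<in> pD \<nu>) \<longleftrightarrow> (\<forall>i<n. ereal (x + \<alpha> i) \<le> \<nu> (c i))" for c
  proof
    assume A: "\<forall>m\<in>(\<Union>s\<in>{-x<..}. \<Lambda> s). h (lcomb sm n w2 c) m \<in> pD \<nu>"
    show "\<forall>i<n. ereal (x + \<alpha> i) \<le> \<nu> (c i)"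
    proof (rule ccontr)
      assume "\<not> (\<forall>i<n. ereal (x + \<alpha> i) \<le> \<nu> (c i))"
      then obtain i where i: "i < n" "\<not> ereal (x + \<alpha> i) \<le> \<nu> (c i)" by blast
      have ci: "c i \<noteq> 0" using i(2) by auto
      have vci: "vr (c i) < x + \<alpha> i" using i(2) nu_vr[OF ci] by simp
      define s where "s = \<alpha> i - vr (c i)"
      define \<gamma> where "\<gamma> = (\<lambda>j. if j = i then inverse (\<rho> (c i)) else 0)"
      have "lcomb sm n v \<gamma> \<in> \<Lambda> s"
        unfolding spl
      proof (intro CollectI exI conjI allI impI)
        show "lcomb sm n v \<gamma> = lcomb sm n v \<gamma>" ..
        fix j assume "j < n"
        show "ereal (s - \<alpha> j) \<le> \<nu> (\<gamma> j)"
        proof (cases "j = i")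
          case True
          then show ?thesis unfolding \<gamma>_def s_def using ci
            by (simp add: nu_vr vr_inverse vr_rho)
        qed (simp add: \<gamma>_def)
      qed
      moreover have "s > - x" unfolding s_def using vci by simp
      ultimately have "h (lcomb sm n w2 c) (lcomb sm n v \<gamma>) \<in> pD \<nu>" using A by blast
      moreover have "(\<Sum>j<n. \<rho> (c j) * \<gamma> j) = 1"
      proof -
        have "(\<Sum>j<n. \<rho> (c j) * \<gamma> j) = (\<Sum>j<n. if j = i then 1 else 0)"
          by (rule sum.cong) (use ci in \<open>auto simp: \<gamma>_def\<close>)
        then show ?thesis using i(1) by simp
      qed
      ultimately show False unfolding hc pD_def by simp
    qed
  next
    assume B: "\<forall>i<n. ereal (x + \<alpha> i) \<le> \<nu> (c i)"
    show "\<forall>m\<in>(\<Union>s\<in>{-x<..}. \<Lambda> s). h (lcomb sm n w2 c) m \<in> pD \<nu>"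
    proof
      fix m assume "m \<in> (\<Union>s\<in>{-x<..}. \<Lambda> s)"
      then obtain s \<gamma> where s: "s > - x" "m = lcomb sm n v \<gamma>" "\<forall>i<n. ereal (s - \<alpha> i) \<le> \<nu> (\<gamma> i)"
        unfolding spl by auto
      have "\<rho> (c i) * \<gamma> i \<in> pD \<nu>" if i: "i \<in> {..<n}" for i
      proof -
        have "ereal (x + \<alpha> i) + ereal (s - \<alpha> i) \<le> \<nu> (\<rho> (c i)) + \<nu> (\<gamma> i)"
          using B s(3) i by (intro add_mono) auto
        moreover have "ereal (x + \<alpha> i) + ereal (s - \<alpha> i) > 0" using s(1) by (simp add: zero_ereal_def)
        ultimately show ?thesis unfolding pD_iff nu_mult by (meson less_le_trans)
      qed
      then show "h (lcomb sm n w2 c) m \<in> pD \<nu>" unfolding s(2) hc by (rule pD_sum)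
    qed
  qed
  show ?thesis
  proof
    show "lat_dual \<nu> h W' \<Lambda> x \<subseteq> {lcomb sm n w2 \<delta> | \<delta>. \<forall>i<n. ereal (x - (- \<alpha> i)) \<le> \<nu> (\<delta> i)}"
    proof
      fix y assume y: "y \<in> lat_dual \<nu> h W' \<Lambda> x"
      then have yW: "y \<in> W'" using lat_dual_W' by blast
      then obtain c where c: "y = lcomb sm n w2 c" using w2s unfolding spanf_def by blast
      have "\<forall>m\<in>(\<Union>s\<in>{-x<..}. \<Lambda> s). h (lcomb sm n w2 c) m \<in> pD \<nu>"
        using y c unfolding lat_dual_def dual_in_def by blast
      then have "\<forall>i<n. ereal (x + \<alpha> i) \<le> \<nu> (c i)" using cond by blast
      then show "y \<in> {lcomb sm n w2 \<delta> | \<delta>. \<forall>i<n. ereal (x - (- \<alpha> i)) \<le> \<nu> (\<delta> i)}" using c by auto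
    qed
  next
    show "{lcomb sm n w2 \<delta> | \<delta>. \<forall>i<n. ereal (x - (- \<alpha> i)) \<le> \<nu> (\<delta> i)} \<subseteq> lat_dual \<nu> h W' \<Lambda> x"
    proof
      fix y assume "y \<in> {lcomb sm n w2 \<delta> | \<delta>. \<forall>i<n. ereal (x - (- \<alpha> i)) \<le> \<nu> (\<delta> i)}"
      then obtain c where c: "y = lcomb sm n w2 c" "\<forall>i<n. ereal (x + \<alpha> i) \<le> \<nu> (c i)" by auto
      have "y \<in> W'" using c(1) W'_lcomb w2W by blast
      moreover have "\<forall>m\<in>(\<Union>s\<in>{-x<..}. \<Lambda> s). h y m \<in> pD \<nu>" using cond c by blast
      ultimately show "y \<in> lat_dual \<nu> h W' \<Lambda> x" unfolding lat_dual_def dual_in_def by blast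
    qed
  qed
qed

lemma phi_split:
  assumes v: "is_basis sm W n v" and w2: "is_basis sm W' n w2"
    and hw2: "\<forall>i<n. \<forall>j<n. h (w2 j) (v i) = (if i = j then 1 else 0)"
    and sp: "splits sm \<nu> n v \<alpha> \<Lambda>"
  shows "splits sm \<nu> (n + n) (join n v w2) (\<lambda>i. if i < n then \<alpha> i else - \<alpha> (i - n)) (phi \<nu> h W' \<Lambda>)"
  unfolding splits_lcomb
proof
  fix x
  have spl: "\<Lambda> x = {lcomb sm n v \<gamma> | \<gamma>. \<forall>i<n. ereal (x - \<alpha> i) \<le> \<nu> (\<gamma> i)}"
    using sp splits_lcomb by blast
  have dl: "lat_dual \<nu> h W' \<Lambda> x = {lcomb sm n w2 \<delta> | \<delta>. \<forall>i<n. ereal (x - (- \<alpha> i)) \<le> \<nu> (\<delta> i)}"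
    by (rule dual_split[OF v w2 hw2 sp])
  show "phi \<nu> h W' \<Lambda> x = {lcomb sm (n + n) (join n v w2) \<delta> | \<delta>.
        \<forall>i<n + n. ereal (x - (if i < n then \<alpha> i else - \<alpha> (i - n))) \<le> \<nu> (\<delta> i)}"
  proof
    show "phi \<nu> h W' \<Lambda> x \<subseteq> {lcomb sm (n + n) (join n v w2) \<delta> | \<delta>.
        \<forall>i<n + n. ereal (x - (if i < n then \<alpha> i else - \<alpha> (i - n))) \<le> \<nu> (\<delta> i)}"
    proof
      fix z assume "z \<in> phi \<nu> h W' \<Lambda> x"
      then obtain \<gamma> \<delta> where z: "z = lcomb sm n v \<gamma> + lcomb sm n w2 \<delta>"
        "\<forall>i<n. ereal (x - \<alpha> i) \<le> \<nu> (\<gamma> i)" "\<forall>i<n. ereal (x - (- \<alpha> i)) \<le> \<nu> (\<delta> i)"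
        unfolding phi_def spl dl by blast
      define f where "f = (\<lambda>i. if i < n then \<gamma> i else \<delta> (i - n))"
      have "z = lcomb sm (n + n) (join n v w2) f" unfolding lcomb_join f_def z(1) by (simp cong: lcomb_cong)
      moreover have "\<forall>i<n + n. ereal (x - (if i < n then \<alpha> i else - \<alpha> (i - n))) \<le> \<nu> (f i)"
        using z(2,3) unfolding f_def by auto
      ultimately show "z \<in> {lcomb sm (n + n) (join n v w2) \<delta> | \<delta>.
        \<forall>i<n + n. ereal (x - (if i < n then \<alpha> i else - \<alpha> (i - n))) \<le> \<nu> (\<delta> i)}" by blast
    qed
  next
    show "{lcomb sm (n + n) (join n v w2) \<delta> | \<delta>.
        \<forall>i<n + n. ereal (x - (if i < n then \<alpha> i else - \<alpha> (i - n))) \<le> \<nu> (\<delta> i)} \<subseteq> phi \<nu> h W' \<Lambda> x"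
    proof
      fix z assume "z \<in> {lcomb sm (n + n) (join n v w2) \<delta> | \<delta>.
        \<forall>i<n + n. ereal (x - (if i < n then \<alpha> i else - \<alpha> (i - n))) \<le> \<nu> (\<delta> i)}"
      then obtain f where f: "z = lcomb sm (n + n) (join n v w2) f"
        "\<forall>i<n + n. ereal (x - (if i < n then \<alpha> i else - \<alpha> (i - n))) \<le> \<nu> (f i)" by blast
      have "\<forall>i<n. ereal (x - \<alpha> i) \<le> \<nu> (f i)"
      proof (intro allI impI)
        fix i assume "i < n"
        then show "ereal (x - \<alpha> i) \<le> \<nu> (f i)" using f(2)[rule_format, of i] by simp
      qed
      then have "lcomb sm n v f \<in> \<Lambda> x" unfolding spl by blast
      moreover have "\<forall>i<n. ereal (x - (- \<alpha> i)) \<le> \<nu> (f (n + i))"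
      proof (intro allI impI)
        fix i assume "i < n"
        then show "ereal (x - (- \<alpha> i)) \<le> \<nu> (f (n + i))" using f(2)[rule_format, of "n + i"] by simp
      qed
      then have "lcomb sm n w2 (\<lambda>i. f (n + i)) \<in> lat_dual \<nu> h W' \<Lambda> x"
        unfolding dl by blast
      ultimately show "z \<in> phi \<nu> h W' \<Lambda> x" unfolding phi_def f(1) lcomb_join by blast
    qed
  qed
qed

lemma part2:
  assumes "0 \<le> t" "t \<le> 1" "affine_comb sm \<nu> W t \<Lambda> \<Lambda>' M"
  shows "affine_comb sm \<nu> UNIV t (phi \<nu> h W' \<Lambda>) (phi \<nu> h W' \<Lambda>') (phi \<nu> h W' M)"
proof -
  obtain n v \<alpha> \<alpha>' where v: "is_basis sm W n v" and s1: "splits sm \<nu> n v \<alpha> \<Lambda>"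
    and s2: "splits sm \<nu> n v \<alpha>' \<Lambda>'" and s3: "splits sm \<nu> n v (\<lambda>i. t * \<alpha> i + (1 - t) * \<alpha>' i) M"
    using assms(3) unfolding affine_comb_def by blast
  obtain w2 where w2: "is_basis sm W' n w2" "\<forall>i<n. \<forall>j<n. h (w2 j) (v i) = (if i = j then 1 else 0)"
    using affine_dual[OF v] by blast
  define \<beta> where "\<beta> = (\<lambda>i. if i < n then \<alpha> i else - \<alpha> (i - n))"
  define \<beta>' where "\<beta>' = (\<lambda>i. if i < n then \<alpha>' i else - \<alpha>' (i - n))"
  have "splits sm \<nu> (n + n) (join n v w2) \<beta> (phi \<nu> h W' \<Lambda>)"
    unfolding \<beta>_def by (rule phi_split[OF v w2 s1])
  moreover have "splits sm \<nu> (n + n) (join n v w2) \<beta>' (phi \<nu> h W' \<Lambda>')"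
    unfolding \<beta>'_def by (rule phi_split[OF v w2 s2])
  moreover have "splits sm \<nu> (n + n) (join n v w2) (\<lambda>i. t * \<beta> i + (1 - t) * \<beta>' i) (phi \<nu> h W' M)"
  proof -
    have "(\<lambda>i. t * \<beta> i + (1 - t) * \<beta>' i) =
      (\<lambda>i. if i < n then t * \<alpha> i + (1 - t) * \<alpha>' i else - (t * \<alpha> (i - n) + (1 - t) * \<alpha>' (i - n)))"
      unfolding \<beta>_def \<beta>'_def by (auto simp: fun_eq_iff algebra_simps)
    then show ?thesis using phi_split[OF v w2 s3] by simp
  qed
  moreover have "is_basis sm UNIV (n + n) (join n v w2)" by (rule join_basis[OF v w2(1)])
  ultimately show ?thesis unfolding affine_comb_def by blast
qed

end



context hsetting begin

context
  fixes g :: "'v \<Rightarrow> 'v"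
  assumes GL: "g \<in> GL_on sm W"
begin

lemma gW: "x \<in> W \<Longrightarrow> g x \<in> W" using GL unfolding GL_on_def right_linear_on_def by blast
lemma gadd: "x \<in> W \<Longrightarrow> y \<in> W \<Longrightarrow> g (x + y) = g x + g y" using GL unfolding GL_on_def right_linear_on_def by blast
lemma gsm: "x \<in> W \<Longrightarrow> g (sm x a) = sm (g x) a" using GL unfolding GL_on_def right_linear_on_def by blast
lemma gbij: "bij_betw g W W" using GL unfolding GL_on_def by blast
lemma g0: "g 0 = 0" using gadd[of 0 0] by simp

lemma g_lcomb: "(\<And>i. i < n \<Longrightarrow> u i \<in> W) \<Longrightarrow> g (lcomb sm n u c) = lcomb sm n (g \<circ> u) c"
proof (induction n)
  case 0 then show ?case by (simp add: g0)
next
  case (Suc n)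
  have "lcomb sm n u c \<in> W" using W_lcomb Suc.prems by simp
  moreover have "sm (u n) (c n) \<in> W" using W_sm Suc.prems by simp
  ultimately show ?case using Suc by (simp add: lcomb_Suc gadd gsm)
qed

lemma part3_main:
  assumes LF: "lattice_fun sm \<nu> \<pi> W \<Lambda>"
  shows "phi \<nu> h W' (act g \<Lambda>) = act (i_WW' h W W' g) (phi \<nu> h W' \<Lambda>)"
proof -
  obtain n v where v: "is_basis sm W n v" using basis_W by blast
  obtain w where w: "\<forall>j<n. w j \<in> W'" "\<forall>i<n. \<forall>j<n. h (v i) (w j) = (if i = j then 1 else 0)"
    using dual_basis[OF v] by blast
  note dc = dual_coords[OF v w]
  have hv: "h (v i) (lcomb sm n w c) = c i" if "i < n" for i c
  proof -
    have "h (v i) (lcomb sm n w c) = (\<Sum>j<n. if i = j then c j else 0)"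
      unfolding h_lcombR by (rule sum.cong) (use w that in auto)
    then show ?thesis using that by (simp add: sum.delta)
  qed
  have vW: "\<And>i. i < n \<Longrightarrow> v i \<in> W" and vs: "W \<subseteq> spanf sm n v" and vi: "indepf sm n v"
    using v is_basis_iff by auto
  have wW: "\<And>j. j < n \<Longrightarrow> w j \<in> W'" using w by blast
  define B where "B = (\<lambda>y. lcomb sm n w (\<lambda>j. h (g (v j)) y))"
  have BW: "B y \<in> W'" for y unfolding B_def using W'_lcomb wW by blast
  have Bprop: "h (g (proj1 W W' x)) y = h x (B y)" for x y
  proof -
    obtain c where c: "proj1 W W' x = lcomb sm n v c" using vs proj_props(1) unfolding spanf_def by blast
    have "h x (B y) = h (proj1 W W' x) (B y) + h (proj2 W W' x) (B y)"
      using proj_props(3)[of x] h_addL by metis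
    also have "h (proj2 W W' x) (B y) = 0" using isoW'[OF proj_props(2) BW] .
    also have "h (proj1 W W' x) (B y) = (\<Sum>i<n. \<rho> (c i) * h (g (v i)) y)"
      unfolding c h_lcombL B_def by (rule sum.cong) (simp_all add: hv)
    also have "\<dots> = h (g (proj1 W W' x)) y"
    proof -
      have "g (lcomb sm n v c) = lcomb sm n (g \<circ> v) c" by (rule g_lcomb) (rule vW)
      then show ?thesis unfolding c by (simp add: h_lcombL)
    qed
    finally show ?thesis by simp
  qed
  have sigB: "sigma_W' h W W' g = B"
    unfolding sigma_W'_def adj_def
  proof (rule the_equality)
    show "\<forall>x y. h (g (proj1 W W' x)) y = h x (B y)" using Bprop by blast
  next
    fix b assume b: "\<forall>x y. h (g (proj1 W W' x)) y = h x (b y)"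
    show "b = B"
    proof
      fix y
      have "h x (b y - B y) = 0" for x using b Bprop by (simp add: h_diffR)
      then show "b y = B y" using nondegR[of "b y - B y"] by simp
    qed
  qed
  define u where "u = g \<circ> v"
  have uW: "\<And>i. i < n \<Longrightarrow> u i \<in> W" unfolding u_def using gW vW by simp
  have ub: "is_basis sm W n u"
    unfolding is_basis_iff
  proof (intro conjI allI impI)
    fix i assume "i < n" then show "u i \<in> W" by (rule uW)
  next
    show "indepf sm n u"
      unfolding indepf_def
    proof (intro allI impI)
      fix c i assume c: "lcomb sm n u c = 0" and i: "i < n"
      have gl: "g (lcomb sm n v c) = lcomb sm n (g \<circ> v) c" by (rule g_lcomb) (rule vW)
      have "g (lcomb sm n v c) = g 0" using c gl g0 unfolding u_def by simp
      moreover have "lcomb sm n v c \<in> W" by (rule W_lcomb) (rule vW)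
      moreover have "inj_on g W" using gbij unfolding bij_betw_def by blast
      ultimately have "lcomb sm n v c = 0" using W_0 inj_onD by metis
      then show "c i = 0" using vi i unfolding indepf_def by blast
    qed
  next
    show "W \<subseteq> spanf sm n u"
    proof
      fix x assume "x \<in> W"
      then obtain x0 where x0: "x0 \<in> W" "x = g x0" using gbij unfolding bij_betw_def by blast
      then obtain c where "x0 = lcomb sm n v c" using vs unfolding spanf_def by blast
      moreover have "g (lcomb sm n v c) = lcomb sm n (g \<circ> v) c" by (rule g_lcomb) (rule vW)
      ultimately have "x = lcomb sm n u c" using x0 unfolding u_def by simp
      then show "x \<in> spanf sm n u" unfolding spanf_def by blast
    qed
  qed
  obtain w' where w': "\<forall>j<n. w' j \<in> W'" "\<forall>i<n. \<forall>j<n. h (u i) (w' j) = (if i = j then 1 else 0)"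
    using dual_basis[OF ub] by blast
  note dc' = dual_coords[OF ub w']
  have hu: "h (u i) (lcomb sm n w' c) = c i" if "i < n" for i c
  proof -
    have "h (u i) (lcomb sm n w' c) = (\<Sum>j<n. if i = j then c j else 0)"
      unfolding h_lcombR by (rule sum.cong) (use w' that in auto)
    then show ?thesis using that by (simp add: sum.delta)
  qed
  have Bw': "B (lcomb sm n w' c) = lcomb sm n w c" for c
    unfolding B_def by (rule lcomb_cong) (use hu in \<open>simp add: u_def\<close>)
  have ws: "W' \<subseteq> spanf sm n w" using dc(1) unfolding spanf_def by blast
  have w's: "W' \<subseteq> spanf sm n w'" using dc'(1) unfolding spanf_def by blast
  have Binj: "inj_on B W'"
  proof (rule inj_onI)
    fix y1 y2 assume y: "y1 \<in> W'" "y2 \<in> W'" "B y1 = B y2"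
    have "h x (y1 - y2) = 0" if x: "x \<in> W" for x
    proof -
      obtain x0 where x0: "x0 \<in> W" "x = g x0" using gbij x unfolding bij_betw_def by blast
      have "h x y1 = h x0 (B y1)" using Bprop[of x0 y1] proj1_W[OF x0(1)] x0(2) by simp
      moreover have "h x y2 = h x0 (B y2)" using Bprop[of x0 y2] proj1_W[OF x0(1)] x0(2) by simp
      ultimately show ?thesis using y(3) by (simp add: h_diffR)
    qed
    then have "y1 - y2 = 0" using pairW'[OF W'_diff[OF y(1) y(2)]] by blast
    then show "y1 = y2" by simp
  qed
  have Bsurj: "B ` W' = W'"
  proof
    show "B ` W' \<subseteq> W'" using BW by blast
    show "W' \<subseteq> B ` W'"
    proof
      fix z assume "z \<in> W'"
      then obtain c where "z = lcomb sm n w c" using ws unfolding spanf_def by blast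
      moreover have "lcomb sm n w' c \<in> W'" using W'_lcomb w'(1) by blast
      ultimately show "z \<in> B ` W'" using Bw' by (metis image_eqI)
    qed
  qed
  have Bbij: "bij_betw B W' W'" using Binj Bsurj by (simp add: bij_betw_def)
  have LW: "\<Lambda> r \<subseteq> W" for r
  proof -
    have "full_lattice sm \<nu> W (\<Lambda> r)" using LF unfolding lattice_fun_def by blast
    then show ?thesis by (rule full_lattice_sub[OF subW])
  qed
  have hgm: "h y (g m) = h (B y) m" if "m \<in> W" for y m
  proof -
    have "h y (g m) = \<epsilon> * \<rho> (h (g m) y)" by (rule h_sym)
    also have "h (g m) y = h m (B y)" using Bprop[of m y] proj1_W[OF that] by simp
    also have "\<epsilon> * \<rho> (h m (B y)) = h (B y) m" using h_sym[of "B y" m] by simp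
    finally show ?thesis .
  qed
  have dual_eq: "lat_dual \<nu> h W' (act g \<Lambda>) t = inv_into W' B ` lat_dual \<nu> h W' \<Lambda> t" for t
  proof -
    have mem: "y \<in> lat_dual \<nu> h W' (act g \<Lambda>) t \<longleftrightarrow> y \<in> W' \<and> B y \<in> lat_dual \<nu> h W' \<Lambda> t" for y
    proof -
      have "y \<in> lat_dual \<nu> h W' (act g \<Lambda>) t \<longleftrightarrow> y \<in> W' \<and> (\<forall>s>-t. \<forall>m\<in>\<Lambda> s. h y (g m) \<in> pD \<nu>)"
        unfolding lat_dual_def dual_in_def act_def by auto
      also have "\<dots> \<longleftrightarrow> y \<in> W' \<and> (\<forall>s>-t. \<forall>m\<in>\<Lambda> s. h (B y) m \<in> pD \<nu>)"
      proof -
        have eqv: "h y (g m) = h (B y) m" if "m \<in> \<Lambda> s" for s m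
        proof (rule hgm)
          show "m \<in> W" using that LW by blast
        qed
        show ?thesis by (simp add: eqv)
      qed
      also have "\<dots> \<longleftrightarrow> y \<in> W' \<and> B y \<in> lat_dual \<nu> h W' \<Lambda> t"
        unfolding lat_dual_def dual_in_def using BW by auto
      finally show ?thesis .
    qed
    show ?thesis
    proof
      show "lat_dual \<nu> h W' (act g \<Lambda>) t \<subseteq> inv_into W' B ` lat_dual \<nu> h W' \<Lambda> t"
      proof
        fix y assume "y \<in> lat_dual \<nu> h W' (act g \<Lambda>) t"
        then have y: "y \<in> W'" "B y \<in> lat_dual \<nu> h W' \<Lambda> t" using mem by blast+
        have "inv_into W' B (B y) = y" using Binj y(1) by (simp add: inv_into_f_f)
        then show "y \<in> inv_into W' B ` lat_dual \<nu> h W' \<Lambda> t" using y(2) by (metis image_eqI)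
      qed
    next
      show "inv_into W' B ` lat_dual \<nu> h W' \<Lambda> t \<subseteq> lat_dual \<nu> h W' (act g \<Lambda>) t"
      proof
        fix y assume "y \<in> inv_into W' B ` lat_dual \<nu> h W' \<Lambda> t"
        then obtain z where z: "z \<in> lat_dual \<nu> h W' \<Lambda> t" "y = inv_into W' B z" by blast
        have zW: "z \<in> W'" using z(1) lat_dual_W' by blast
        have "y \<in> W'" using z(2) zW Bsurj by (metis inv_into_into)
        moreover have "B y = z" using z(2) zW Bsurj by (simp add: f_inv_into_f)
        ultimately show "y \<in> lat_dual \<nu> h W' (act g \<Lambda>) t" using mem z(1) by blast
      qed
    qed
  qed
  show ?thesis
  proof
    fix t
    show "phi \<nu> h W' (act g \<Lambda>) t = act (i_WW' h W W' g) (phi \<nu> h W' \<Lambda>) t"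
    proof
      show "phi \<nu> h W' (act g \<Lambda>) t \<subseteq> act (i_WW' h W W' g) (phi \<nu> h W' \<Lambda>) t"
      proof
        fix x assume "x \<in> phi \<nu> h W' (act g \<Lambda>) t"
        then obtain a y where x: "x = a + y" "a \<in> g ` \<Lambda> t" "y \<in> lat_dual \<nu> h W' (act g \<Lambda>) t"
          unfolding phi_def act_def by blast
        obtain a0 where a0: "a0 \<in> \<Lambda> t" "a = g a0" using x(2) by blast
        obtain y0 where y0: "y0 \<in> lat_dual \<nu> h W' \<Lambda> t" "y = inv_into W' B y0" using x(3) dual_eq by blast
        have "a0 \<in> W" using a0(1) LW by blast
        moreover have "y0 \<in> W'" using y0(1) lat_dual_W' by blast
        ultimately have "i_WW' h W W' g (a0 + y0) = x"
          unfolding i_WW'_def sigB using proj1_eq proj2_eq x(1) a0(2) y0(2) by simp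
        moreover have "a0 + y0 \<in> phi \<nu> h W' \<Lambda> t" unfolding phi_def using a0(1) y0(1) by blast
        ultimately show "x \<in> act (i_WW' h W W' g) (phi \<nu> h W' \<Lambda>) t" unfolding act_def by blast
      qed
    next
      show "act (i_WW' h W W' g) (phi \<nu> h W' \<Lambda>) t \<subseteq> phi \<nu> h W' (act g \<Lambda>) t"
      proof
        fix x assume "x \<in> act (i_WW' h W W' g) (phi \<nu> h W' \<Lambda>) t"
        then obtain a0 y0 where x: "x = i_WW' h W W' g (a0 + y0)" "a0 \<in> \<Lambda> t" "y0 \<in> lat_dual \<nu> h W' \<Lambda> t"
          unfolding act_def phi_def by blast
        have "a0 \<in> W" using x(2) LW by blast
        moreover have "y0 \<in> W'" using x(3) lat_dual_W' by blast
        ultimately have "x = g a0 + inv_into W' B y0"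
          unfolding x(1) i_WW'_def sigB using proj1_eq proj2_eq by simp
        moreover have "g a0 \<in> act g \<Lambda> t" unfolding act_def using x(2) by blast
        moreover have "inv_into W' B y0 \<in> lat_dual \<nu> h W' (act g \<Lambda>) t" using dual_eq x(3) by blast
        ultimately show "x \<in> phi \<nu> h W' (act g \<Lambda>) t" unfolding phi_def by blast
      qed
    qed
  qed
qed

end
end


theorem mainTheorem13:
  fixes \<nu> :: "'d::division_ring \<Rightarrow> ereal" and \<pi> :: 'd and \<rho> :: "'d \<Rightarrow> 'd" and \<epsilon> :: 'd
    and sm :: "'v::ab_group_add \<Rightarrow> 'd \<Rightarrow> 'v" and h :: "'v \<Rightarrow> 'v \<Rightarrow> 'd"
    and W W' :: "'v set"
  assumes "local_setting \<nu> \<pi>"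
    and "continuous_involution \<nu> \<rho>"
    and "fin_dim_right_vs sm"
    and "eps_hermitian sm \<rho> \<epsilon> h"
    and "non_degenerate h"
    and "isotropic h"
    and "max_totally_isotropic sm h W"
    and "max_totally_isotropic sm h W'"
    and "direct_sum sm W W'"
  shows "(\<forall>\<Lambda>. lattice_fun sm \<nu> \<pi> W \<Lambda> \<longrightarrow> self_dual_lattice_fun sm \<nu> \<pi> h (phi \<nu> h W' \<Lambda>))
       \<and> (\<forall>\<Lambda> \<Lambda>' M t. lattice_fun sm \<nu> \<pi> W \<Lambda> \<longrightarrow> lattice_fun sm \<nu> \<pi> W \<Lambda>' \<longrightarrow>
             lattice_fun sm \<nu> \<pi> W M \<longrightarrow> 0 \<le> t \<longrightarrow> t \<le> 1 \<longrightarrow>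
             affine_comb sm \<nu> W t \<Lambda> \<Lambda>' M \<longrightarrow>
             affine_comb sm \<nu> UNIV t (phi \<nu> h W' \<Lambda>) (phi \<nu> h W' \<Lambda>') (phi \<nu> h W' M))
       \<and> (\<forall>g\<in>GL_on sm W. \<forall>\<Lambda>. lattice_fun sm \<nu> \<pi> W \<Lambda> \<longrightarrow>
             phi \<nu> h W' (act g \<Lambda>) = act (i_WW' h W W' g) (phi \<nu> h W' \<Lambda>))"
proof -
  interpret hsetting \<nu> \<pi> \<rho> \<epsilon> sm h W W'
    using assms unfolding hsetting_def valsetting_def hsetting_axioms_def by blast
  show ?thesis using part1 part2 part3_main by blast
qed

end
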